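(* Let $\lambda_1,\lambda_2>0$ and $\nu_1,\nu_2\in(0,1)$. Let $\{N_{\nu_1,\lambda_1}(t):t\geq0\}$ and $\{N_{\nu_2,\lambda_2}(t):t\geq0\}$ be two independent fractional Poisson processes and let $Y_{\underline{\nu},\underline{\lambda}}(t):=N_{\nu_1,\lambda_1}(t)-N_{\nu_2,\lambda_2}(t)$ (the fractional Skellam process of type 1). Define $$\Psi^{(1)}_{\underline{\nu},\underline{\lambda}}(\theta):=\begin{cases}(\lambda_1(e^\theta-1))^{1/\nu_1} & \text{if } \theta\geq0,\\ (\lambda_2(e^{-\theta}-1))^{1/\nu_2} & \text{if } \theta<0.\end{cases}$$ Then the family $\left\{\frac{Y_{\underline{\nu},\underline{\lambda}}(t)}{t}:t>0\right\}$ satisfies the large deviation principle (as $t\to\infty$) with speed $v_t=t$ and good rate function $$I^{(1)}_{\mathrm{LD}}(x):=\sup_{\theta\in\mathbb{R}}\{\theta x-\Psi^{(1)}_{\underline{\nu},\underline{\lambda}}(\theta)\}.$$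
   Context: For $\nu\in(0,1)$, $\{L_\nu(t):t\ge0\}$ denotes the inverse of a $\nu$-stable subordinator $\{D_\nu(s):s\geq0\}$ (with $\mathbb{E}[e^{-uD_\nu(s)}]=e^{-su^\nu}$), i.e. $L_\nu(t)=\inf\{s\geq0:D_\nu(s)>t\}$; its moment generating function is $\mathbb{E}[e^{\theta L_\nu(t)}]=E_\nu(\theta t^\nu)$ for all $\theta\in\mathbb{R}$, where $E_\nu(x)=\sum_{k\ge0}x^k/\Gamma(\nu k+1)$ is the Mittag-Leffler function. The fractional Poisson process with parameters $\nu\in(0,1)$, $\lambda>0$ is $N_{\nu,\lambda}(t):=N_\lambda(L_\nu(t))$, where $\{N_\lambda(t)\}$ is a Poisson process with intensity $\lambda$ independent of $\{L_\nu(t)\}$. A family of real random variables $\{Z_t:t>0\}$ satisfies the large deviation principle (LDP) with speed $v_t\to\infty$ and rate function $I$ (lower semicontinuous, $[0,\infty]$-valued) if $\limsup_{t\to\infty}\frac{1}{v_t}\log P(Z_t\in C)\leq-\inf_{x\in C}I(x)$ for all closed $C$ and $\liminf_{t\to\infty}\frac{1}{v_t}\log P(Z_t\in O)\geq-\inf_{x\in O}I(x)$ for all open $O$; $I$ is good if all its sublevel sets $\{I\le\beta\}$ are compact. *)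

theory Defs
  imports "HOL-Probability.Probability"
begin

definition indep_increments :: "'a measure \<Rightarrow> (real \<Rightarrow> 'a \<Rightarrow> real) \<Rightarrow> bool" where
  "indep_increments M X \<longleftrightarrow>
     (\<forall>(n::nat) (ts::nat \<Rightarrow> real). 0 \<le> ts 0 \<and> (\<forall>i<n. ts i \<le> ts (Suc i)) \<longrightarrow>
        prob_space.indep_vars M (\<lambda>_. borel) (\<lambda>i \<omega>. X (ts (Suc i)) \<omega> - X (ts i) \<omega>) {..<n})"

definition poisson_process :: "'a measure \<Rightarrow> real \<Rightarrow> (real \<Rightarrow> 'a \<Rightarrow> real) \<Rightarrow> bool" where
  "poisson_process M lam N \<longleftrightarrow>
     prob_space M \<and> 0 < lam \<and>
     (\<forall>t. N t \<in> borel_measurable M) \<and>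
     (\<forall>\<omega>\<in>space M. N 0 \<omega> = 0 \<and> (\<forall>t. N t \<omega> \<in> \<nat>) \<and> mono_on {0..} (\<lambda>t. N t \<omega>) \<and>
        (\<forall>t\<ge>0. continuous (at_right t) (\<lambda>s. N s \<omega>))) \<and>
     indep_increments M N \<and>
     (\<forall>s t (k::nat). 0 \<le> s \<and> s < t \<longrightarrow>
        measure M {\<omega>\<in>space M. N t \<omega> - N s \<omega> = real k}
          = (lam * (t - s)) ^ k / fact k * exp (- (lam * (t - s))))"

definition stable_subordinator :: "'a measure \<Rightarrow> real \<Rightarrow> (real \<Rightarrow> 'a \<Rightarrow> real) \<Rightarrow> bool" where
  "stable_subordinator M nu D \<longleftrightarrow>
     prob_space M \<and>
     (\<forall>s. D s \<in> borel_measurable M) \<and>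
     (\<forall>\<omega>\<in>space M. D 0 \<omega> = 0 \<and> mono_on {0..} (\<lambda>s. D s \<omega>) \<and>
        (\<forall>s\<ge>0. continuous (at_right s) (\<lambda>r. D r \<omega>))) \<and>
     indep_increments M D \<and>
     (\<forall>s h. 0 \<le> s \<and> 0 \<le> h \<longrightarrow>
        distr M borel (\<lambda>\<omega>. D (s + h) \<omega> - D s \<omega>) = distr M borel (D h)) \<and>
     (\<forall>s u. 0 \<le> s \<and> 0 \<le> u \<longrightarrow>
        prob_space.expectation M (\<lambda>\<omega>. exp (- u * D s \<omega>)) = exp (- s * u powr nu))"

definition inverse_subordinator :: "(real \<Rightarrow> 'a \<Rightarrow> real) \<Rightarrow> real \<Rightarrow> 'a \<Rightarrow> real" where
  "inverse_subordinator D t \<omega> = Inf {s. 0 \<le> s \<and> D s \<omega> > t}"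

definition elog :: "real \<Rightarrow> ereal" where
  "elog p = (if p \<le> 0 then - \<infinity> else ereal (ln p))"

text \<open>Large deviation principle for {Z t} as t \<rightarrow> \<infinity> with speed v and rate function I,
  I being [0,\<infinity>]-valued and lower semicontinuous (closed sublevel sets).\<close>
definition LDP :: "'a measure \<Rightarrow> (real \<Rightarrow> 'a \<Rightarrow> real) \<Rightarrow> (real \<Rightarrow> real) \<Rightarrow> (real \<Rightarrow> ereal) \<Rightarrow> bool" where
  "LDP M Z v I \<longleftrightarrow>
     (\<forall>x. 0 \<le> I x) \<and> (\<forall>\<beta>::ereal. closed {x. I x \<le> \<beta>}) \<and>
     (\<forall>C. closed C \<longrightarrow>
        Limsup at_top (\<lambda>t. ereal (1 / v t) * elog (measure M {\<omega>\<in>space M. Z t \<omega> \<in> C}))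
          \<le> - (INF x\<in>C. I x)) \<and>
     (\<forall>U. open U \<longrightarrow>
        Liminf at_top (\<lambda>t. ereal (1 / v t) * elog (measure M {\<omega>\<in>space M. Z t \<omega> \<in> U}))
          \<ge> - (INF x\<in>U. I x))"

definition good_rate_function :: "(real \<Rightarrow> ereal) \<Rightarrow> bool" where
  "good_rate_function I \<longleftrightarrow> (\<forall>\<beta>::real. compact {x. I x \<le> ereal \<beta>})"

definition Psi1 :: "real \<Rightarrow> real \<Rightarrow> real \<Rightarrow> real \<Rightarrow> real \<Rightarrow> real" where
  "Psi1 nu1 nu2 lam1 lam2 \<theta> =
     (if \<theta> \<ge> 0 then (lam1 * (exp \<theta> - 1)) powr (1 / nu1)
      else (lam2 * (exp (- \<theta>) - 1)) powr (1 / nu2))"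

definition I_LD1 :: "real \<Rightarrow> real \<Rightarrow> real \<Rightarrow> real \<Rightarrow> real \<Rightarrow> ereal" where
  "I_LD1 nu1 nu2 lam1 lam2 x = (SUP \<theta>::real. ereal (\<theta> * x - Psi1 nu1 nu2 lam1 lam2 \<theta>))"

end

theory Submission
  imports Defs "HOL-Probability.Probability"
begin

definition phi :: "real \<Rightarrow> real \<Rightarrow> real \<Rightarrow> real" where
  "phi p l \<theta> = (l * (exp \<theta> - 1)) powr p"

definition gphi :: "real \<Rightarrow> real \<Rightarrow> real \<Rightarrow> real" where
  "gphi p l \<theta> = p * l * exp \<theta> * (l * (exp \<theta> - 1)) powr (p - 1)"

lemma phi_deriv:
  assumes "0 < l" "0 < \<theta>"
  shows "(phi p l has_real_derivative gphi p l \<theta>) (at \<theta>)"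
proof -
  have b: "0 < l * (exp \<theta> - 1)" using assms by (simp add: mult_pos_pos)
  have d: "((\<lambda>x. l * (exp x - 1)) has_real_derivative l * exp \<theta>) (at \<theta>)"
    by (auto intro!: derivative_eq_intros)
  have "((\<lambda>x. (l * (exp x - 1)) powr p) has_real_derivative
      (l * (exp \<theta> - 1)) powr p * (0 * ln (l * (exp \<theta> - 1)) + l * exp \<theta> * p / (l * (exp \<theta> - 1)))) (at \<theta>)"
    by (rule DERIV_powr[OF d b]) (rule DERIV_const)
  also have "(l * (exp \<theta> - 1)) powr p * (0 * ln (l * (exp \<theta> - 1)) + l * exp \<theta> * p / (l * (exp \<theta> - 1)))
      = gphi p l \<theta>"
    using b by (simp add: gphi_def powr_diff field_simps)
  finally show ?thesis unfolding phi_def .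
qed

lemma gphi_cont:
  assumes "0 < l" "1 < p"
  shows "continuous_on {0..} (gphi p l)"
  unfolding gphi_def
  by (intro continuous_intros continuous_on_powr') (use assms in \<open>auto intro!: mult_nonneg_nonneg\<close>)

lemma gphi_0: "1 < p \<Longrightarrow> gphi p l 0 = 0"
  by (simp add: gphi_def)

lemma phi_cont:
  assumes "0 < l" "0 < p"
  shows "continuous_on {0..} (phi p l)"
  unfolding phi_def
  by (intro continuous_intros continuous_on_powr') (use assms in \<open>auto intro!: mult_nonneg_nonneg\<close>)

lemma gphi_large:
  assumes "0 < l" "1 < p"
  shows "\<exists>\<theta>\<ge>0. x \<le> gphi p l \<theta>"
proof -
  define \<theta> where "\<theta> = ln (1 + 1/l) + \<bar>x\<bar> / (p * l)"
  have t0: "0 \<le> \<theta>" using assms unfolding \<theta>_def by (auto intro!: add_nonneg_nonneg divide_nonneg_pos)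
  have "exp (ln (1 + 1/l)) \<le> exp \<theta>" unfolding \<theta>_def using assms by (auto intro!: divide_nonneg_pos)
  moreover have "0 < 1 + 1/l" using assms by (simp add: add_pos_pos)
  ultimately have "1 + 1/l \<le> exp \<theta>" by simp
  then have "1 \<le> l * (exp \<theta> - 1)" using assms by (simp add: field_simps)
  then have pw: "1 \<le> (l * (exp \<theta> - 1)) powr (p - 1)" using assms by (simp add: ge_one_powr_ge_zero)
  have "0 < p * l * exp \<theta>" using assms by simp
  have "\<bar>x\<bar> / (p * l) \<le> \<theta>" unfolding \<theta>_def using assms by (auto intro!: ln_ge_zero)
  also have "\<theta> \<le> exp \<theta>" using exp_ge_add_one_self[of \<theta>] by linarith
  finally have "\<bar>x\<bar> \<le> p * l * exp \<theta>" using assms by (simp add: field_simps)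
  also have "\<dots> \<le> p * l * exp \<theta> * (l * (exp \<theta> - 1)) powr (p - 1)"
    using pw \<open>0 < p * l * exp \<theta>\<close> by (simp add: mult_le_cancel_left1)
  finally show ?thesis using t0 unfolding gphi_def by (intro exI[of _ \<theta>]) linarith
qed

lemma phi_deriv_surj:
  assumes "0 < l" "1 < p" "0 < x"
  shows "\<exists>\<theta>>0. (phi p l has_real_derivative x) (at \<theta>)"
proof -
  obtain b where b: "b \<ge> 0" "x \<le> gphi p l b" using gphi_large assms by blast
  have "continuous_on {0..b} (gphi p l)"
    using gphi_cont[OF assms(1,2)] by (rule continuous_on_subset) auto
  then obtain \<theta> where th: "0 \<le> \<theta>" "\<theta> \<le> b" "gphi p l \<theta> = x"
    using IVT'[of "gphi p l" 0 x b] b gphi_0 assms by auto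
  then have "\<theta> \<noteq> 0" using gphi_0 assms by auto
  with th have "\<theta> > 0" by auto
  then show ?thesis using phi_deriv[OF assms(1) \<open>\<theta>>0\<close>, of p] th by auto
qed

lemma phi_0[simp]: "0 < p \<Longrightarrow> phi p l 0 = 0"
  by (simp add: phi_def)

lemma phi_small:
  assumes "0 < l" "1 < p" "0 < \<delta>"
  shows "\<exists>\<eta>0>0. \<forall>\<eta>. 0 < \<eta> \<and> \<eta> \<le> \<eta>0 \<longrightarrow> phi p l \<eta> < \<eta> * \<delta>"
proof -
  have "continuous (at 0 within {0..}) (gphi p l)"
    using gphi_cont[OF assms(1,2)] by (simp add: continuous_on_eq_continuous_within)
  then have "((gphi p l) \<longlongrightarrow> 0) (at 0 within {0..})"
    using gphi_0 assms by (simp add: continuous_within)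
  then have "eventually (\<lambda>x. dist (gphi p l x) 0 < \<delta>) (at 0 within {0..})"
    using assms(3) tendstoD by blast
  then obtain d where d: "d > 0" "\<And>x. x \<in> {0..} \<Longrightarrow> x \<noteq> 0 \<Longrightarrow> dist x 0 < d \<Longrightarrow> dist (gphi p l x) 0 < \<delta>"
    unfolding eventually_at by blast
  show ?thesis
  proof (intro exI[of _ "d/2"] conjI allI impI)
    show "0 < d/2" using d by simp
    fix \<eta> assume e: "0 < \<eta> \<and> \<eta> \<le> d/2"
    have "continuous_on {0..\<eta>} (phi p l)"
      using phi_cont[of l p] assms by (rule_tac continuous_on_subset) auto
    moreover have "phi p l differentiable at x" if "0 < x" "x < \<eta>" for x
      using phi_deriv[OF assms(1), of x p] that real_differentiable_def by blast
    ultimately obtain L z where z: "0 < z" "z < \<eta>" "(phi p l has_real_derivative L) (at z)"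
      "phi p l \<eta> - phi p l 0 = (\<eta> - 0) * L"
      using MVT[of 0 \<eta> "phi p l"] e by blast
    have "L = gphi p l z" using DERIV_unique[OF z(3) phi_deriv[OF assms(1) z(1)]] .
    moreover have "gphi p l z < \<delta>" using d(2)[of z] z e by (auto simp: dist_real_def)
    ultimately show "phi p l \<eta> < \<eta> * \<delta>" using z e assms by simp
  qed
qed

definition LOK :: "(real \<Rightarrow> real) \<Rightarrow> real \<Rightarrow> real \<Rightarrow> bool" where
  "LOK f x \<theta> \<longleftrightarrow> (\<forall>\<delta>>0. \<exists>\<eta>>0. f (\<theta> + \<eta>) - f \<theta> < \<eta> * (x + \<delta>) \<and> f (\<theta> - \<eta>) - f \<theta> < - \<eta> * (x - \<delta>))"

lemma deriv_LOK:
  assumes "(f has_real_derivative x) (at \<theta>)"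
  shows "LOK f x \<theta>"
  unfolding LOK_def
proof (intro allI impI)
  fix \<delta> :: real assume "0 < \<delta>"
  have "((\<lambda>h. (f (\<theta> + h) - f \<theta>) / h) \<longlongrightarrow> x) (at 0)"
    using assms by (simp add: DERIV_def)
  then have "eventually (\<lambda>h. dist ((f (\<theta> + h) - f \<theta>) / h) x < \<delta>) (at 0)"
    using \<open>0 < \<delta>\<close> tendstoD by blast
  then obtain d where d: "d > 0" "\<And>h. h \<noteq> 0 \<Longrightarrow> dist h 0 < d \<Longrightarrow> dist ((f (\<theta> + h) - f \<theta>) / h) x < \<delta>"
    unfolding eventually_at by auto
  define \<eta> where "\<eta> = d/2"
  have e: "\<eta> > 0" "\<eta> < d" using d by (auto simp: \<eta>_def)
  have 1: "\<bar>(f (\<theta> + \<eta>) - f \<theta>) / \<eta> - x\<bar> < \<delta>" using d(2)[of \<eta>] e by (auto simp: dist_real_def)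
  have 2: "\<bar>(f (\<theta> - \<eta>) - f \<theta>) / (- \<eta>) - x\<bar> < \<delta>" using d(2)[of "-\<eta>"] e by (auto simp: dist_real_def)
  from 1 have "(f (\<theta> + \<eta>) - f \<theta>) / \<eta> < x + \<delta>" by linarith
  then have a: "f (\<theta> + \<eta>) - f \<theta> < \<eta> * (x + \<delta>)" using e by (simp add: field_simps)
  have eq: "(f (\<theta> - \<eta>) - f \<theta>) / (- \<eta>) = (f \<theta> - f (\<theta> - \<eta>)) / \<eta>"
    using e by (simp add: field_simps)
  have "x - \<delta> < (f \<theta> - f (\<theta> - \<eta>)) / \<eta>" using 2 eq by linarith
  then have "\<eta> * (x - \<delta>) < f \<theta> - f (\<theta> - \<eta>)" using e by (simp add: field_simps)
  then have b: "f (\<theta> - \<eta>) - f \<theta> < - \<eta> * (x - \<delta>)" by linarith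
  show "\<exists>\<eta>>0. f (\<theta> + \<eta>) - f \<theta> < \<eta> * (x + \<delta>) \<and> f (\<theta> - \<eta>) - f \<theta> < - \<eta> * (x - \<delta>)"
    using a b e by blast
qed

lemma Psi1_sym: "Psi1 n1 n2 l1 l2 (- \<theta>) = Psi1 n2 n1 l2 l1 \<theta>"
  by (auto simp: Psi1_def)

lemma Psi1_phi: "0 \<le> \<theta> \<Longrightarrow> Psi1 n1 n2 l1 l2 \<theta> = phi (1/n1) l1 \<theta>"
  by (simp add: Psi1_def phi_def)

lemma Psi1_nonneg: "0 \<le> Psi1 n1 n2 l1 l2 \<theta>"
  by (simp add: Psi1_def)

lemma Psi1_0[simp]: "Psi1 n1 n2 l1 l2 0 = 0"
  by (simp add: Psi1_def)

lemma Psi1_LOK_pos: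
  assumes "0 < l1" "0 < n1" "n1 < 1" "0 < x"
  shows "\<exists>\<theta>. LOK (Psi1 n1 n2 l1 l2) x \<theta>"
proof -
  have p: "1 < 1/n1" using assms by (simp add: field_simps)
  obtain \<theta> where th: "\<theta> > 0" "(phi (1/n1) l1 has_real_derivative x) (at \<theta>)"
    using phi_deriv_surj[OF assms(1) p assms(4)] by blast
  have "(Psi1 n1 n2 l1 l2 has_real_derivative x) (at \<theta>)"
    by (rule has_field_derivative_transform_within_open[OF th(2), of "{0<..}"])
       (use th in \<open>auto simp: Psi1_phi\<close>)
  then show ?thesis using deriv_LOK by blast
qed

lemma LOK_sym:
  assumes "LOK (Psi1 n2 n1 l2 l1) (- x) \<theta>"
  shows "LOK (Psi1 n1 n2 l1 l2) x (- \<theta>)"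
  unfolding LOK_def
proof (intro allI impI)
  fix \<delta> :: real assume "0 < \<delta>"
  then obtain \<eta> where e: "\<eta> > 0" "Psi1 n2 n1 l2 l1 (\<theta> + \<eta>) - Psi1 n2 n1 l2 l1 \<theta> < \<eta> * (- x + \<delta>)"
    "Psi1 n2 n1 l2 l1 (\<theta> - \<eta>) - Psi1 n2 n1 l2 l1 \<theta> < - \<eta> * (- x - \<delta>)"
    using assms unfolding LOK_def by blast
  have s: "Psi1 n1 n2 l1 l2 y = Psi1 n2 n1 l2 l1 (- y)" for y
    using Psi1_sym[of n2 n1 l2 l1 y] by simp
  show "\<exists>\<eta>>0. Psi1 n1 n2 l1 l2 (- \<theta> + \<eta>) - Psi1 n1 n2 l1 l2 (- \<theta>) < \<eta> * (x + \<delta>) \<and>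
      Psi1 n1 n2 l1 l2 (- \<theta> - \<eta>) - Psi1 n1 n2 l1 l2 (- \<theta>) < - \<eta> * (x - \<delta>)"
    using e by (intro exI[of _ \<eta>]) (simp add: s algebra_simps)
qed

lemma Psi1_LOK:
  assumes "0 < l1" "0 < n1" "n1 < 1" "0 < l2" "0 < n2" "n2 < 1"
  shows "\<exists>\<theta>. LOK (Psi1 n1 n2 l1 l2) x \<theta>"
proof (cases x "0::real" rule: linorder_cases)
  case less
  then obtain \<theta> where "LOK (Psi1 n2 n1 l2 l1) (- x) \<theta>"
    using Psi1_LOK_pos[OF assms(4,5,6), of "-x"] by auto
  then show ?thesis using LOK_sym by blast
next
  case greater
  then show ?thesis using Psi1_LOK_pos[OF assms(1,2,3)] by blast
next
  case equal
  have p1: "1 < 1/n1" "1 < 1/n2" using assms by (simp_all add: field_simps)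
  show ?thesis
  proof (intro exI[of _ 0], unfold LOK_def, intro allI impI)
    fix \<delta> :: real assume "0 < \<delta>"
    obtain a where a: "a > 0" "\<And>\<eta>. 0 < \<eta> \<and> \<eta> \<le> a \<Longrightarrow> phi (1/n1) l1 \<eta> < \<eta> * \<delta>"
      using phi_small[OF assms(1) p1(1) \<open>0<\<delta>\<close>] by blast
    obtain b where b: "b > 0" "\<And>\<eta>. 0 < \<eta> \<and> \<eta> \<le> b \<Longrightarrow> phi (1/n2) l2 \<eta> < \<eta> * \<delta>"
      using phi_small[OF assms(4) p1(2) \<open>0<\<delta>\<close>] by blast
    define \<eta> where "\<eta> = min a b"
    have e: "0 < \<eta>" "\<eta> \<le> a" "\<eta> \<le> b" using a b by (auto simp: \<eta>_def)
    have "Psi1 n1 n2 l1 l2 \<eta> = phi (1/n1) l1 \<eta>" using e by (simp add: Psi1_phi)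
    moreover have "Psi1 n1 n2 l1 l2 (- \<eta>) = phi (1/n2) l2 \<eta>"
      using e by (simp add: Psi1_sym Psi1_phi)
    ultimately show "\<exists>\<eta>>0. Psi1 n1 n2 l1 l2 (0 + \<eta>) - Psi1 n1 n2 l1 l2 0 < \<eta> * (x + \<delta>) \<and>
        Psi1 n1 n2 l1 l2 (0 - \<eta>) - Psi1 n1 n2 l1 l2 0 < - \<eta> * (x - \<delta>)"
      using a(2)[of \<eta>] b(2)[of \<eta>] e equal by (intro exI[of _ \<eta>]) auto
  qed
qed


lemma tilt_integrable:
  fixes Y :: "'a \<Rightarrow> real"
  assumes "Y \<in> borel_measurable M" "integrable M (\<lambda>\<omega>. exp ((\<theta> + \<eta>) * Y \<omega>))"
    "A \<in> sets M" "\<And>\<omega>. \<omega> \<in> A \<Longrightarrow> \<eta> * s \<le> \<eta> * Y \<omega>"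
  shows "integrable M (\<lambda>\<omega>. indicator A \<omega> * exp (\<theta> * Y \<omega>))"
    and "(\<integral>\<omega>. indicator A \<omega> * exp (\<theta> * Y \<omega>) \<partial>M) \<le> exp (- \<eta> * s) * (\<integral>\<omega>. exp ((\<theta> + \<eta>) * Y \<omega>) \<partial>M)"
proof -
  have pw: "indicator A \<omega> * exp (\<theta> * Y \<omega>) \<le> exp (- \<eta> * s) * exp ((\<theta> + \<eta>) * Y \<omega>)" for \<omega>
  proof (cases "\<omega> \<in> A")
    case True
    then have "\<theta> * Y \<omega> \<le> - \<eta> * s + (\<theta> + \<eta>) * Y \<omega>" using assms(4)[of \<omega>] by (simp add: algebra_simps)
    then show ?thesis using True by (simp add: exp_add[symmetric])
  qed simp
  have i2: "integrable M (\<lambda>\<omega>. exp (- \<eta> * s) * exp ((\<theta> + \<eta>) * Y \<omega>))"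
    using assms(2) by simp
  show i1: "integrable M (\<lambda>\<omega>. indicator A \<omega> * exp (\<theta> * Y \<omega>))"
    by (rule Bochner_Integration.integrable_bound[OF i2]) (use assms pw in auto)
  have "(\<integral>\<omega>. indicator A \<omega> * exp (\<theta> * Y \<omega>) \<partial>M) \<le> (\<integral>\<omega>. exp (- \<eta> * s) * exp ((\<theta> + \<eta>) * Y \<omega>) \<partial>M)"
    by (rule integral_mono[OF i1 i2 pw])
  then show "(\<integral>\<omega>. indicator A \<omega> * exp (\<theta> * Y \<omega>) \<partial>M) \<le> exp (- \<eta> * s) * (\<integral>\<omega>. exp ((\<theta> + \<eta>) * Y \<omega>) \<partial>M)"
    by simp
qed

lemma chernoff:
  fixes Y :: "'a \<Rightarrow> real"
  assumes "prob_space M" "Y \<in> borel_measurable M" "integrable M (\<lambda>\<omega>. exp (\<theta> * Y \<omega>))"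
    "A \<in> sets M" "\<And>\<omega>. \<omega> \<in> A \<Longrightarrow> \<theta> * s \<le> \<theta> * Y \<omega>"
  shows "measure M A \<le> exp (- \<theta> * s) * (\<integral>\<omega>. exp (\<theta> * Y \<omega>) \<partial>M)"
proof -
  have "measure M A = (\<integral>\<omega>. indicator A \<omega> * exp (0 * Y \<omega>) \<partial>M)"
    using assms(4) sets.sets_into_space[OF assms(4)] by (simp add: Int_absorb2)
  also have "\<dots> \<le> exp (- \<theta> * s) * (\<integral>\<omega>. exp ((0 + \<theta>) * Y \<omega>) \<partial>M)"
    by (rule tilt_integrable(2)) (use assms in auto)
  finally show ?thesis by simp
qed

lemma mgf_pos:
  fixes Y :: "'a \<Rightarrow> real"
  assumes "prob_space M" "integrable M (\<lambda>\<omega>. exp (\<theta> * Y \<omega>))"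
  shows "0 < (\<integral>\<omega>. exp (\<theta> * Y \<omega>) \<partial>M)"
proof -
  interpret prob_space M by fact
  have "(\<integral>\<omega>. exp (\<theta> * Y \<omega>) \<partial>M) \<noteq> 0"
  proof
    assume "(\<integral>\<omega>. exp (\<theta> * Y \<omega>) \<partial>M) = 0"
    then have "AE \<omega> in M. exp (\<theta> * Y \<omega>) = 0"
      using integral_nonneg_eq_0_iff_AE[OF assms(2)] by simp
    then have "AE \<omega> in M. False" by simp
    then show False by simp
  qed
  moreover have "0 \<le> (\<integral>\<omega>. exp (\<theta> * Y \<omega>) \<partial>M)" by simp
  ultimately show ?thesis by linarith
qed

lemma exp_neg_small:
  fixes c t :: real
  assumes "0 < c" "4 / c \<le> t"
  shows "exp (- t * c) \<le> 1/4"
proof -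
  have "4 \<le> t * c" using assms by (simp add: field_simps)
  then have "exp 4 \<le> exp (t * c)" by simp
  moreover have "5 \<le> exp (4::real)" using exp_ge_add_one_self[of 4] by simp
  ultimately have "4 \<le> exp (t * c)" by linarith
  then show ?thesis by (simp add: exp_minus field_simps)
qed

lemma exp_neg_half:
  fixes c t :: real
  assumes "0 < c" "1 / c \<le> t"
  shows "exp (- t * c) \<le> 1/2"
proof -
  have "1 \<le> t * c" using assms by (simp add: field_simps)
  then have "exp 1 \<le> exp (t * c)" by simp
  moreover have "2 \<le> exp (1::real)" using exp_ge_add_one_self[of 1] by simp
  ultimately have "2 \<le> exp (t * c)" by linarith
  then show ?thesis by (simp add: exp_minus field_simps)
qed


lemma lower_core:
  fixes Y :: "real \<Rightarrow> 'a \<Rightarrow> real" and \<Lambda> :: "real \<Rightarrow> real"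
  assumes P: "prob_space M"
    and meas: "\<And>t. Y t \<in> borel_measurable M"
    and int: "\<And>\<theta>. \<forall>\<^sub>F t in at_top. integrable M (\<lambda>\<omega>. exp (\<theta> * Y t \<omega>))"
    and lim: "\<And>\<theta>. ((\<lambda>t. ln (\<integral>\<omega>. exp (\<theta> * Y t \<omega>) \<partial>M) / t) \<longlongrightarrow> \<Lambda> \<theta>) at_top"
    and lok: "LOK \<Lambda> x \<theta>" and y: "\<theta> * x - \<Lambda> \<theta> < y" and d0: "0 < \<delta>0"
  shows "\<forall>\<^sub>F t in at_top. exp (- t * y) \<le> measure M {\<omega> \<in> space M. \<bar>Y t \<omega> / t - x\<bar> < \<delta>0}"
proof -
  interpret prob_space M by fact
  note [measurable] = meas
  define gap where "gap = y - (\<theta> * x - \<Lambda> \<theta>)"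
  have gap: "0 < gap" using y by (simp add: gap_def)
  define \<delta> where "\<delta> = min \<delta>0 (gap / (4 * (\<bar>\<theta>\<bar> + 1)))"
  have \<delta>: "0 < \<delta>" "\<delta> \<le> \<delta>0" using gap d0 by (auto simp: \<delta>_def)
  have "\<bar>\<theta>\<bar> * \<delta> \<le> (\<bar>\<theta>\<bar> + 1) * \<delta>" using \<delta> by (simp add: mult_right_mono)
  also have "\<dots> \<le> (\<bar>\<theta>\<bar> + 1) * (gap / (4 * (\<bar>\<theta>\<bar> + 1)))"
    by (intro mult_left_mono) (auto simp: \<delta>_def)
  also have "\<dots> = gap / 4" by (simp add: field_simps)
  finally have \<delta>3: "\<bar>\<theta>\<bar> * \<delta> \<le> gap / 4" .
  obtain \<eta> where \<eta>: "\<eta> > 0" "\<Lambda> (\<theta> + \<eta>) - \<Lambda> \<theta> < \<eta> * (x + \<delta>)" "\<Lambda> (\<theta> - \<eta>) - \<Lambda> \<theta> < - \<eta> * (x - \<delta>)"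
    using lok \<delta> unfolding LOK_def by blast
  define \<kappa> where "\<kappa> = min (\<eta> * (x + \<delta>) - (\<Lambda> (\<theta> + \<eta>) - \<Lambda> \<theta>)) (- \<eta> * (x - \<delta>) - (\<Lambda> (\<theta> - \<eta>) - \<Lambda> \<theta>))"
  have \<kappa>: "0 < \<kappa>" "\<kappa> \<le> \<eta> * (x + \<delta>) - (\<Lambda> (\<theta> + \<eta>) - \<Lambda> \<theta>)" "\<kappa> \<le> - \<eta> * (x - \<delta>) - (\<Lambda> (\<theta> - \<eta>) - \<Lambda> \<theta>)"
    using \<eta> by (auto simp: \<kappa>_def)
  define \<epsilon> where "\<epsilon> = min (\<kappa>/3) (gap/4)"
  have \<epsilon>: "0 < \<epsilon>" "\<epsilon> \<le> \<kappa>/3" "\<epsilon> \<le> gap/4" using \<kappa> gap by (auto simp: \<epsilon>_def)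
  define L where "L t \<theta>' = ln (\<integral>\<omega>. exp (\<theta>' * Y t \<omega>) \<partial>M) / t" for t \<theta>'
  have limL: "\<forall>\<^sub>F t in at_top. \<bar>L t \<theta>' - \<Lambda> \<theta>'\<bar> < \<epsilon>" for \<theta>'
    using tendstoD[OF lim[of \<theta>'] \<epsilon>(1)] by (simp add: L_def dist_real_def)
  have ev: "\<forall>\<^sub>F t in at_top. 0 < t \<and> 4 / (\<kappa>/3) \<le> t \<and> 1 / (gap/4) \<le> t \<and>
      integrable M (\<lambda>\<omega>. exp (\<theta> * Y t \<omega>)) \<and> integrable M (\<lambda>\<omega>. exp ((\<theta> + \<eta>) * Y t \<omega>)) \<and>
      integrable M (\<lambda>\<omega>. exp ((\<theta> + - \<eta>) * Y t \<omega>)) \<and>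
      \<bar>L t \<theta> - \<Lambda> \<theta>\<bar> < \<epsilon> \<and> \<bar>L t (\<theta> + \<eta>) - \<Lambda> (\<theta> + \<eta>)\<bar> < \<epsilon> \<and> \<bar>L t (\<theta> + - \<eta>) - \<Lambda> (\<theta> + - \<eta>)\<bar> < \<epsilon>"
    by (intro eventually_conj eventually_gt_at_top eventually_ge_at_top int limL)
  show ?thesis
    using ev
  proof (rule eventually_mono, elim conjE)
    fix t assume t0: "0 < t" and t1: "4 / (\<kappa>/3) \<le> t" and t2: "1 / (gap/4) \<le> t"
      and i0: "integrable M (\<lambda>\<omega>. exp (\<theta> * Y t \<omega>))"
      and ip: "integrable M (\<lambda>\<omega>. exp ((\<theta> + \<eta>) * Y t \<omega>))"
      and im: "integrable M (\<lambda>\<omega>. exp ((\<theta> + - \<eta>) * Y t \<omega>))"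
      and l0: "\<bar>L t \<theta> - \<Lambda> \<theta>\<bar> < \<epsilon>" and lp: "\<bar>L t (\<theta> + \<eta>) - \<Lambda> (\<theta> + \<eta>)\<bar> < \<epsilon>"
      and lm: "\<bar>L t (\<theta> + - \<eta>) - \<Lambda> (\<theta> + - \<eta>)\<bar> < \<epsilon>"
    define m where "m \<theta>' = (\<integral>\<omega>. exp (\<theta>' * Y t \<omega>) \<partial>M)" for \<theta>'
    have mexp: "m \<theta>' = exp (t * L t \<theta>')" if "integrable M (\<lambda>\<omega>. exp (\<theta>' * Y t \<omega>))" for \<theta>'
    proof -
      have "0 < m \<theta>'" unfolding m_def using mgf_pos[OF P that] .
      then show ?thesis using t0 by (simp add: L_def m_def)
    qed
    define A where "A = {\<omega>\<in>space M. \<bar>Y t \<omega> / t - x\<bar> < \<delta>}"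
    define Bp where "Bp = {\<omega>\<in>space M. t * (x + \<delta>) \<le> Y t \<omega>}"
    define Bm where "Bm = {\<omega>\<in>space M. Y t \<omega> \<le> t * (x - \<delta>)}"
    have [measurable]: "A \<in> sets M" "Bp \<in> sets M" "Bm \<in> sets M"
      unfolding A_def Bp_def Bm_def by measurable
    define c where "c = exp (t * (\<theta> * x + \<bar>\<theta>\<bar> * \<delta>))"
    have c0: "0 < c" by (simp add: c_def)
    have pw: "exp (\<theta> * Y t \<omega>) \<le> indicator A \<omega> * c + indicator Bp \<omega> * exp (\<theta> * Y t \<omega>)
        + indicator Bm \<omega> * exp (\<theta> * Y t \<omega>)" if \<omega>: "\<omega> \<in> space M" for \<omega>
    proof (cases "\<omega> \<in> A")
      case True
      then have a: "\<bar>Y t \<omega> / t - x\<bar> < \<delta>" by (simp add: A_def)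
      have "\<theta> * (Y t \<omega> / t - x) \<le> \<bar>\<theta>\<bar> * \<bar>Y t \<omega> / t - x\<bar>"
        by (metis abs_ge_self abs_mult)
      also have "\<dots> \<le> \<bar>\<theta>\<bar> * \<delta>" using a by (intro mult_left_mono) auto
      finally have "t * (\<theta> * (Y t \<omega> / t - x)) \<le> t * (\<bar>\<theta>\<bar> * \<delta>)"
        using t0 by (intro mult_left_mono) auto
      then have "\<theta> * Y t \<omega> \<le> t * (\<theta> * x + \<bar>\<theta>\<bar> * \<delta>)"
        using t0 by (simp add: algebra_simps)
      then have "exp (\<theta> * Y t \<omega>) \<le> c" by (simp add: c_def)
      then show ?thesis using True c0 by (auto simp: indicator_def add_nonneg_nonneg less_imp_le)
    next
      case False
      then have "\<bar>Y t \<omega> / t - x\<bar> \<ge> \<delta>" using \<omega> by (simp add: A_def)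
      then have "Y t \<omega> / t \<ge> x + \<delta> \<or> Y t \<omega> / t \<le> x - \<delta>" by linarith
      then have "\<omega> \<in> Bp \<or> \<omega> \<in> Bm"
        using t0 \<omega> by (auto simp: Bp_def Bm_def field_simps)
      moreover have "0 \<le> c" by (simp add: c_def)
      ultimately show ?thesis by (auto simp: indicator_def)
    qed
    have ip1: "integrable M (\<lambda>\<omega>. indicator Bp \<omega> * exp (\<theta> * Y t \<omega>))"
      and ip2: "(\<integral>\<omega>. indicator Bp \<omega> * exp (\<theta> * Y t \<omega>) \<partial>M) \<le> exp (- \<eta> * (t * (x + \<delta>))) * m (\<theta> + \<eta>)"
      using tilt_integrable[of "Y t" M \<theta> \<eta> Bp "t * (x + \<delta>)"] ip \<eta>(1) unfolding m_def
      by (auto simp: Bp_def)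
    have im1: "integrable M (\<lambda>\<omega>. indicator Bm \<omega> * exp (\<theta> * Y t \<omega>))"
      and im2: "(\<integral>\<omega>. indicator Bm \<omega> * exp (\<theta> * Y t \<omega>) \<partial>M) \<le> exp (- (- \<eta>) * (t * (x - \<delta>))) * m (\<theta> + - \<eta>)"
      using tilt_integrable[of "Y t" M \<theta> "- \<eta>" Bm "t * (x - \<delta>)"] im \<eta>(1) unfolding m_def
      by (auto simp: Bm_def)
    have "integrable M (indicator A :: 'a \<Rightarrow> real)"
      by (rule integrable_real_indicator) (auto simp: less_top[symmetric])
    then have iA: "integrable M (\<lambda>\<omega>. indicator A \<omega> * c)" by simp
    have "m \<theta> \<le> (\<integral>\<omega>. indicator A \<omega> * c + indicator Bp \<omega> * exp (\<theta> * Y t \<omega>)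
        + indicator Bm \<omega> * exp (\<theta> * Y t \<omega>) \<partial>M)"
      unfolding m_def by (intro integral_mono_AE i0 Bochner_Integration.integrable_add iA ip1 im1 AE_I2 pw)
    also have "\<dots> = measure M A * c + (\<integral>\<omega>. indicator Bp \<omega> * exp (\<theta> * Y t \<omega>) \<partial>M)
        + (\<integral>\<omega>. indicator Bm \<omega> * exp (\<theta> * Y t \<omega>) \<partial>M)"
      using iA ip1 im1 by (simp add: Bochner_Integration.integral_add)
    finally have dec: "m \<theta> \<le> measure M A * c + exp (- \<eta> * (t * (x + \<delta>))) * m (\<theta> + \<eta>)
        + exp (- (- \<eta>) * (t * (x - \<delta>))) * m (\<theta> + - \<eta>)"
      using ip2 im2 by linarith
    have "L t (\<theta> + \<eta>) - \<eta> * (x + \<delta>) \<le> L t \<theta> - \<kappa>/3"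
      using lp l0 \<kappa> \<epsilon> by linarith
    then have "t * (L t (\<theta> + \<eta>) - \<eta> * (x + \<delta>)) \<le> t * (L t \<theta> - \<kappa>/3)"
      using t0 by (intro mult_left_mono) auto
    then have "exp (- \<eta> * (t * (x + \<delta>))) * m (\<theta> + \<eta>) \<le> m \<theta> * exp (- t * (\<kappa>/3))"
    proof -
      assume H: "t * (L t (\<theta> + \<eta>) - \<eta> * (x + \<delta>)) \<le> t * (L t \<theta> - \<kappa>/3)"
      have "exp (- \<eta> * (t * (x + \<delta>))) * m (\<theta> + \<eta>) = exp (t * (L t (\<theta> + \<eta>) - \<eta> * (x + \<delta>)))"
        unfolding mexp[OF ip] by (simp add: exp_add[symmetric] algebra_simps)
      also have "\<dots> \<le> exp (t * (L t \<theta> - \<kappa>/3))" using H by simp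
      also have "\<dots> = m \<theta> * exp (- t * (\<kappa>/3))" unfolding mexp[OF i0] by (simp add: exp_add[symmetric] algebra_simps)
      finally show ?thesis .
    qed
    also have "\<dots> \<le> m \<theta> * (1/4)"
      using exp_neg_small[of "\<kappa>/3" t] \<kappa> t1 mgf_pos[OF P i0] unfolding m_def
      by (intro mult_left_mono) auto
    finally have b1: "exp (- \<eta> * (t * (x + \<delta>))) * m (\<theta> + \<eta>) \<le> m \<theta> / 4" by simp
    have lm': "\<bar>L t (\<theta> + - \<eta>) - \<Lambda> (\<theta> - \<eta>)\<bar> < \<epsilon>" using lm by simp
    have "L t (\<theta> + - \<eta>) + \<eta> * (x - \<delta>) \<le> L t \<theta> - \<kappa>/3"
      using lm' l0 \<kappa> \<epsilon> by linarith
    then have "t * (L t (\<theta> + - \<eta>) + \<eta> * (x - \<delta>)) \<le> t * (L t \<theta> - \<kappa>/3)"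
      using t0 by (intro mult_left_mono) auto
    then have "exp (- (- \<eta>) * (t * (x - \<delta>))) * m (\<theta> + - \<eta>) \<le> m \<theta> * exp (- t * (\<kappa>/3))"
    proof -
      assume H: "t * (L t (\<theta> + - \<eta>) + \<eta> * (x - \<delta>)) \<le> t * (L t \<theta> - \<kappa>/3)"
      have "exp (- (- \<eta>) * (t * (x - \<delta>))) * m (\<theta> + - \<eta>) = exp (t * (L t (\<theta> + - \<eta>) + \<eta> * (x - \<delta>)))"
        unfolding mexp[OF im] by (simp add: exp_add[symmetric] algebra_simps)
      also have "\<dots> \<le> exp (t * (L t \<theta> - \<kappa>/3))" using H by simp
      also have "\<dots> = m \<theta> * exp (- t * (\<kappa>/3))" unfolding mexp[OF i0] by (simp add: exp_add[symmetric] algebra_simps)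
      finally show ?thesis .
    qed
    also have "\<dots> \<le> m \<theta> * (1/4)"
      using exp_neg_small[of "\<kappa>/3" t] \<kappa> t1 mgf_pos[OF P i0] unfolding m_def
      by (intro mult_left_mono) auto
    finally have b2: "exp (- (- \<eta>) * (t * (x - \<delta>))) * m (\<theta> + - \<eta>) \<le> m \<theta> / 4" by simp
    from dec b1 b2 have "m \<theta> / 2 \<le> measure M A * c" by linarith
    then have "m \<theta> / 2 / c \<le> measure M A" using c_def by (simp add: field_simps)
    moreover have "exp (- t * y) \<le> m \<theta> / 2 / c"
    proof -
      have "exp (- t * (gap/4)) \<le> 1/2" using exp_neg_half[of "gap/4" t] gap t2 by auto
      have "- t * y \<le> t * L t \<theta> + - t * (gap / 4) - t * (\<theta> * x + \<bar>\<theta>\<bar> * \<delta>)"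
      proof -
        have l0': "\<Lambda> \<theta> - \<epsilon> < L t \<theta>" using l0 by linarith
        obtain a where a: "a = \<bar>\<theta>\<bar> * \<delta>" by blast
        have a3: "a \<le> gap/4" using \<delta>3 a by simp
        have "- y \<le> L t \<theta> - gap/4 - (\<theta> * x + a)"
          using l0' \<epsilon>(3) a3 gap_def gap by linarith
        then have "- y \<le> L t \<theta> - gap/4 - (\<theta> * x + \<bar>\<theta>\<bar> * \<delta>)" using a by simp
        then have "t * (- y) \<le> t * (L t \<theta> - gap/4 - (\<theta> * x + \<bar>\<theta>\<bar> * \<delta>))"
          using t0 by (intro mult_left_mono) auto
        then show ?thesis by (simp add: algebra_simps)
      qed
      then have "exp (- t * y) \<le> exp (t * L t \<theta>) * exp (- t * (gap / 4)) / c"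
        by (simp add: c_def exp_add[symmetric] exp_diff[symmetric])
      also have "\<dots> \<le> exp (t * L t \<theta>) * (1/2) / c"
        using \<open>exp (- t * (gap/4)) \<le> 1/2\<close> by (intro divide_right_mono mult_left_mono) (auto simp: c_def)
      also have "\<dots> = m \<theta> / 2 / c" by (simp add: mexp i0)
      finally show ?thesis .
    qed
    moreover have "measure M A \<le> measure M {\<omega> \<in> space M. \<bar>Y t \<omega> / t - x\<bar> < \<delta>0}"
      by (intro finite_measure_mono) (use \<delta> in \<open>auto simp: A_def\<close>, measurable)
    ultimately show "exp (- t * y) \<le> measure M {\<omega> \<in> space M. \<bar>Y t \<omega> / t - x\<bar> < \<delta>0}" by linarith
  qed
qed


definition Irate :: "(real \<Rightarrow> real) \<Rightarrow> real \<Rightarrow> ereal" where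
  "Irate \<Lambda> x = (SUP \<theta>. ereal (\<theta> * x - \<Lambda> \<theta>))"

lemma Irate_nonneg: "\<Lambda> 0 = 0 \<Longrightarrow> 0 \<le> Irate \<Lambda> x"
  unfolding Irate_def by (rule SUP_upper2[of 0]) auto

lemma Irate_0: "(\<And>\<theta>. 0 \<le> \<Lambda> \<theta>) \<Longrightarrow> \<Lambda> 0 = 0 \<Longrightarrow> Irate \<Lambda> 0 = 0"
  unfolding Irate_def by (intro antisym SUP_least SUP_upper2[of 0]) auto

lemma Irate_ge: "ereal (\<theta> * x - \<Lambda> \<theta>) \<le> Irate \<Lambda> x"
  unfolding Irate_def by (rule SUP_upper) auto

lemma Irate_closed: "closed {x. Irate \<Lambda> x \<le> \<beta>}"
proof -
  have "{x. Irate \<Lambda> x \<le> \<beta>} = (\<Inter>\<theta>. {x. ereal (\<theta> * x - \<Lambda> \<theta>) \<le> \<beta>})"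
    unfolding Irate_def by (auto simp: SUP_le_iff)
  moreover have "closed {x. ereal (\<theta> * x - \<Lambda> \<theta>) \<le> \<beta>}" for \<theta>
    by (intro closed_Collect_le continuous_intros)
  ultimately show ?thesis by auto
qed

lemma Irate_exists_pos:
  assumes "0 < a" "\<And>\<theta>. 0 \<le> \<Lambda> \<theta>" "\<Lambda> 0 = 0" "ereal y < Irate \<Lambda> a"
  shows "\<exists>\<theta>\<ge>0. y < \<theta> * a - \<Lambda> \<theta>"
proof -
  obtain \<theta> where th: "ereal y < ereal (\<theta> * a - \<Lambda> \<theta>)"
    using assms(4) unfolding Irate_def less_SUP_iff by blast
  show ?thesis
  proof (cases "\<theta> \<ge> 0")
    case True then show ?thesis using th by auto
  next
    case False
    then have "\<theta> * a \<le> 0" using assms(1) by (simp add: mult_nonpos_nonneg)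
    then show ?thesis using th assms(2)[of \<theta>] assms(3) by (intro exI[of _ 0]) auto
  qed
qed

lemma Irate_exists_neg:
  assumes "a < 0" "\<And>\<theta>. 0 \<le> \<Lambda> \<theta>" "\<Lambda> 0 = 0" "ereal y < Irate \<Lambda> a"
  shows "\<exists>\<theta>\<le>0. y < \<theta> * a - \<Lambda> \<theta>"
proof -
  obtain \<theta> where th: "ereal y < ereal (\<theta> * a - \<Lambda> \<theta>)"
    using assms(4) unfolding Irate_def less_SUP_iff by blast
  show ?thesis
  proof (cases "\<theta> \<le> 0")
    case True then show ?thesis using th by auto
  next
    case False
    then have "\<theta> * a \<le> 0" using assms(1) by (simp add: mult_nonneg_nonpos)
    then show ?thesis using th assms(2)[of \<theta>] assms(3) by (intro exI[of _ 0]) auto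
  qed
qed

lemma upper_point:
  fixes Y :: "real \<Rightarrow> 'a \<Rightarrow> real" and \<Lambda> :: "real \<Rightarrow> real"
  assumes P: "prob_space M"
    and meas: "\<And>t. Y t \<in> borel_measurable M"
    and int: "\<And>\<theta>. \<forall>\<^sub>F t in at_top. integrable M (\<lambda>\<omega>. exp (\<theta> * Y t \<omega>))"
    and lim: "\<And>\<theta>. ((\<lambda>t. ln (\<integral>\<omega>. exp (\<theta> * Y t \<omega>) \<partial>M) / t) \<longlongrightarrow> \<Lambda> \<theta>) at_top"
    and y: "y < \<theta> * a - \<Lambda> \<theta>"
  shows "\<exists>g>0. \<forall>\<^sub>F t in at_top. measure M {\<omega>\<in>space M. \<theta> * (t * a) \<le> \<theta> * Y t \<omega>} \<le> exp (- t * (y + g))"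
proof -
  note [measurable] = meas
  define g where "g = (\<theta> * a - \<Lambda> \<theta> - y) / 2"
  have g: "0 < g" using y by (simp add: g_def)
  have ev: "\<forall>\<^sub>F t in at_top. 0 < t \<and> integrable M (\<lambda>\<omega>. exp (\<theta> * Y t \<omega>)) \<and>
     dist (ln (\<integral>\<omega>. exp (\<theta> * Y t \<omega>) \<partial>M) / t) (\<Lambda> \<theta>) < g"
    by (intro eventually_conj eventually_gt_at_top int tendstoD[OF lim g])
  have "\<forall>\<^sub>F t in at_top. measure M {\<omega>\<in>space M. \<theta> * (t * a) \<le> \<theta> * Y t \<omega>} \<le> exp (- t * (y + g))"
    using ev
  proof (rule eventually_mono, elim conjE)
    fix t :: real assume t0: "0 < t" and i: "integrable M (\<lambda>\<omega>. exp (\<theta> * Y t \<omega>))"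
      and d: "dist (ln (\<integral>\<omega>. exp (\<theta> * Y t \<omega>) \<partial>M) / t) (\<Lambda> \<theta>) < g"
    define m where "m = (\<integral>\<omega>. exp (\<theta> * Y t \<omega>) \<partial>M)"
    have m0: "0 < m" unfolding m_def by (rule mgf_pos[OF P i])
    have "measure M {\<omega>\<in>space M. \<theta> * (t * a) \<le> \<theta> * Y t \<omega>} \<le> exp (- \<theta> * (t * a)) * m"
      unfolding m_def by (rule chernoff[OF P meas i]) auto
    also have "\<dots> = exp (- \<theta> * (t * a) + t * (ln m / t))"
    proof -
      have "t * (ln m / t) = ln m" using t0 by simp
      then have "exp (t * (ln m / t)) = m" using m0 by simp
      then show ?thesis by (simp only: exp_add)
    qed
    also have "\<dots> \<le> exp (- t * (y + g))"
    proof -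
      have "ln m / t < \<Lambda> \<theta> + g" using d by (simp add: m_def dist_real_def)
      then have "t * (ln m / t) \<le> t * (\<Lambda> \<theta> + g)" using t0 by (intro mult_left_mono) auto
      moreover have "- \<theta> * (t * a) + t * (\<Lambda> \<theta> + g) = - t * (y + g)"
        unfolding g_def by (simp add: field_simps)
      ultimately show ?thesis by simp
    qed
    finally show "measure M {\<omega>\<in>space M. \<theta> * (t * a) \<le> \<theta> * Y t \<omega>} \<le> exp (- t * (y + g))" .
  qed
  then show ?thesis using g by blast
qed

lemma conv_upper:
  assumes "\<And>y. ereal y < J \<Longrightarrow> \<forall>\<^sub>F t in at_top. p t \<le> exp (- t * y)"
  shows "Limsup at_top (\<lambda>t. ereal (1 / t) * elog (p t)) \<le> - J"
proof (rule dense_ge)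
  fix z assume z: "- J < z"
  show "Limsup at_top (\<lambda>t. ereal (1 / t) * elog (p t)) \<le> z"
  proof (cases z)
    case (real w)
    then have "- ereal w < J" using ereal_uminus_less_reorder[of J "ereal w"] z by blast
    then have "ereal (- w) < J" by simp
    then have "\<forall>\<^sub>F t in at_top. p t \<le> exp (- t * (- w))" by (rule assms)
    then have ev: "\<forall>\<^sub>F t in at_top. p t \<le> exp (- t * (- w)) \<and> 0 < t"
      by (intro eventually_conj eventually_gt_at_top)
    have "\<forall>\<^sub>F t in at_top. ereal (1 / t) * elog (p t) \<le> z"
      using ev
    proof (rule eventually_mono, elim conjE)
      fix t :: real assume p: "p t \<le> exp (- t * (- w))" and t: "0 < t"
      show "ereal (1 / t) * elog (p t) \<le> z"
      proof (cases "p t \<le> 0")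
        case True then show ?thesis using t by (simp add: elog_def)
      next
        case False
        then have "ln (p t) \<le> ln (exp (t * w))" using p by (subst ln_le_cancel_iff) auto
        then have "ln (p t) \<le> t * w" by simp
        then have "ln (p t) / t \<le> w" using t by (simp add: divide_le_eq mult.commute)
        then show ?thesis using False real by (simp add: elog_def)
      qed
    qed
    then show ?thesis by (rule Limsup_bounded)
  next
    case PInf then show ?thesis by simp
  next
    case MInf then show ?thesis using z by simp
  qed
qed

lemma conv_lower:
  assumes "\<And>y. I < ereal y \<Longrightarrow> \<forall>\<^sub>F t in at_top. exp (- t * y) \<le> p t"
  shows "- I \<le> Liminf at_top (\<lambda>t. ereal (1 / t) * elog (p t))"
proof (rule dense_le)
  fix z assume z: "z < - I"
  show "z \<le> Liminf at_top (\<lambda>t. ereal (1 / t) * elog (p t))"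
  proof (cases z)
    case (real w)
    then have "I < - ereal w" using ereal_less_uminus_reorder[of "ereal w" I] z by blast
    then have "I < ereal (- w)" by simp
    then have "\<forall>\<^sub>F t in at_top. exp (- t * (- w)) \<le> p t" by (rule assms)
    then have ev: "\<forall>\<^sub>F t in at_top. exp (- t * (- w)) \<le> p t \<and> 0 < t"
      by (intro eventually_conj eventually_gt_at_top)
    have "\<forall>\<^sub>F t in at_top. z \<le> ereal (1 / t) * elog (p t)"
      using ev
    proof (rule eventually_mono, elim conjE)
      fix t :: real assume p: "exp (- t * (- w)) \<le> p t" and t: "0 < t"
      have pp: "0 < p t" using p by (meson exp_gt_zero less_le_trans)
      then have "t * w \<le> ln (p t)" using p by (simp add: ln_ge_iff)
      then have "w \<le> ln (p t) / t" using t by (simp add: le_divide_eq mult.commute)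
      then show "z \<le> ereal (1 / t) * elog (p t)" using pp real by (simp add: elog_def)
    qed
    then show ?thesis by (rule Liminf_bounded)
  next
    case PInf then show ?thesis using z by simp
  next
    case MInf then show ?thesis by simp
  qed
qed


lemma upper_closed:
  fixes Y :: "real \<Rightarrow> 'a \<Rightarrow> real" and \<Lambda> :: "real \<Rightarrow> real"
  assumes P: "prob_space M"
    and meas: "\<And>t. Y t \<in> borel_measurable M"
    and int: "\<And>\<theta>. \<forall>\<^sub>F t in at_top. integrable M (\<lambda>\<omega>. exp (\<theta> * Y t \<omega>))"
    and lim: "\<And>\<theta>. ((\<lambda>t. ln (\<integral>\<omega>. exp (\<theta> * Y t \<omega>) \<partial>M) / t) \<longlongrightarrow> \<Lambda> \<theta>) at_top"
    and nn: "\<And>\<theta>. 0 \<le> \<Lambda> \<theta>" and z: "\<Lambda> 0 = 0"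
    and C: "closed C" and y: "ereal y < (INF x\<in>C. Irate \<Lambda> x)"
  shows "\<forall>\<^sub>F t in at_top. measure M {\<omega>\<in>space M. Y t \<omega> / t \<in> C} \<le> exp (- t * y)"
proof -
  interpret prob_space M by fact
  note [measurable] = meas
  have Cb[measurable]: "C \<in> sets borel" using C by (simp add: borel_closed)
  show ?thesis
  proof (cases "0 \<in> C")
    case True
    then have "(INF x\<in>C. Irate \<Lambda> x) \<le> 0" using Irate_0[of \<Lambda>, OF nn z] by (metis INF_lower)
    then have "ereal y < 0" using y by (rule order.strict_trans2[rotated])
    then have y0: "y < 0" by simp
    show ?thesis
      using eventually_gt_at_top[of 0]
    proof (rule eventually_mono)
      fix t :: real assume "0 < t"
      then have "0 \<le> - t * y" using y0 by (simp add: mult_pos_neg less_imp_le)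
      then have "1 \<le> exp (- t * y)" by simp
      then show "measure M {\<omega>\<in>space M. Y t \<omega> / t \<in> C} \<le> exp (- t * y)"
        using prob_le_1 by (meson order_trans)
    qed
  next
    case False
    have "open (- C)" using C by (simp add: open_Compl)
    then obtain r where r: "r > 0" "ball 0 r \<subseteq> - C" using False open_contains_ball by blast
    have rC: "r \<le> \<bar>x\<bar>" if "x \<in> C" for x
    proof (rule ccontr)
      assume "\<not> r \<le> \<bar>x\<bar>"
      then have "x \<in> ball 0 r" by (simp add: dist_real_def)
      then show False using r that by auto
    qed
    define Cp where "Cp = C \<inter> {r..}"
    define Cm where "Cm = C \<inter> {..-r}"
    have hp: "\<exists>g>0. \<forall>\<^sub>F t in at_top. measure M {\<omega>\<in>space M. Y t \<omega> / t \<in> Cp} \<le> exp (- t * (y + g))"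
    proof (cases "Cp = {}")
      case True then show ?thesis by (intro exI[of _ 1]) auto
    next
      case False
      have bdd: "bdd_below Cp" unfolding Cp_def by (rule bdd_belowI[of _ r]) auto
      have cl: "closed Cp" unfolding Cp_def using C by (intro closed_Int closed_atLeast)
      define a where "a = Inf Cp"
      have aC: "a \<in> Cp" unfolding a_def by (rule closed_contains_Inf[OF False bdd cl])
      then have a0: "0 < a" using r by (auto simp: Cp_def)
      have "(INF x\<in>C. Irate \<Lambda> x) \<le> Irate \<Lambda> a" using aC by (intro INF_lower) (auto simp: Cp_def)
      then have "ereal y < Irate \<Lambda> a" using y by simp
      then obtain \<theta> where th: "\<theta> \<ge> 0" "y < \<theta> * a - \<Lambda> \<theta>"
        using Irate_exists_pos[of a \<Lambda>, OF a0 nn z] by blast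
      obtain g where g: "g > 0" "\<forall>\<^sub>F t in at_top. measure M {\<omega>\<in>space M. \<theta> * (t * a) \<le> \<theta> * Y t \<omega>} \<le> exp (- t * (y + g))"
        using upper_point[OF P meas int lim th(2)] by blast
      have "\<forall>\<^sub>F t in at_top. measure M {\<omega>\<in>space M. Y t \<omega> / t \<in> Cp} \<le> exp (- t * (y + g))"
        using eventually_conj[OF g(2) eventually_gt_at_top[of 0]]
      proof (rule eventually_mono, elim conjE)
        fix t :: real assume m: "measure M {\<omega>\<in>space M. \<theta> * (t * a) \<le> \<theta> * Y t \<omega>} \<le> exp (- t * (y + g))"
          and t: "0 < t"
        have "measure M {\<omega>\<in>space M. Y t \<omega> / t \<in> Cp} \<le> measure M {\<omega>\<in>space M. \<theta> * (t * a) \<le> \<theta> * Y t \<omega>}"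
        proof (rule finite_measure_mono)
          show "{\<omega>\<in>space M. Y t \<omega> / t \<in> Cp} \<subseteq> {\<omega>\<in>space M. \<theta> * (t * a) \<le> \<theta> * Y t \<omega>}"
          proof safe
            fix \<omega> assume "\<omega> \<in> space M" "Y t \<omega> / t \<in> Cp"
            then have "a \<le> Y t \<omega> / t" unfolding a_def using bdd by (intro cInf_lower)
            then have "t * a \<le> Y t \<omega>" using t by (simp add: field_simps)
            then show "\<theta> * (t * a) \<le> \<theta> * Y t \<omega>" using th(1) by (intro mult_left_mono)
          qed
        qed measurable
        then show "measure M {\<omega>\<in>space M. Y t \<omega> / t \<in> Cp} \<le> exp (- t * (y + g))" using m by linarith
      qed
      then show ?thesis using g(1) by blast
    qed
    have hm: "\<exists>g>0. \<forall>\<^sub>F t in at_top. measure M {\<omega>\<in>space M. Y t \<omega> / t \<in> Cm} \<le> exp (- t * (y + g))"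
    proof (cases "Cm = {}")
      case True then show ?thesis by (intro exI[of _ 1]) auto
    next
      case False
      have bdd: "bdd_above Cm" unfolding Cm_def by (rule bdd_aboveI[of _ "-r"]) auto
      have cl: "closed Cm" unfolding Cm_def using C by (intro closed_Int closed_atMost)
      define a where "a = Sup Cm"
      have aC: "a \<in> Cm" unfolding a_def by (rule closed_contains_Sup[OF False bdd cl])
      then have a0: "a < 0" using r by (auto simp: Cm_def)
      have "(INF x\<in>C. Irate \<Lambda> x) \<le> Irate \<Lambda> a" using aC by (intro INF_lower) (auto simp: Cm_def)
      then have "ereal y < Irate \<Lambda> a" using y by simp
      then obtain \<theta> where th: "\<theta> \<le> 0" "y < \<theta> * a - \<Lambda> \<theta>"
        using Irate_exists_neg[of a \<Lambda>, OF a0 nn z] by blast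
      obtain g where g: "g > 0" "\<forall>\<^sub>F t in at_top. measure M {\<omega>\<in>space M. \<theta> * (t * a) \<le> \<theta> * Y t \<omega>} \<le> exp (- t * (y + g))"
        using upper_point[OF P meas int lim th(2)] by blast
      have "\<forall>\<^sub>F t in at_top. measure M {\<omega>\<in>space M. Y t \<omega> / t \<in> Cm} \<le> exp (- t * (y + g))"
        using eventually_conj[OF g(2) eventually_gt_at_top[of 0]]
      proof (rule eventually_mono, elim conjE)
        fix t :: real assume m: "measure M {\<omega>\<in>space M. \<theta> * (t * a) \<le> \<theta> * Y t \<omega>} \<le> exp (- t * (y + g))"
          and t: "0 < t"
        have "measure M {\<omega>\<in>space M. Y t \<omega> / t \<in> Cm} \<le> measure M {\<omega>\<in>space M. \<theta> * (t * a) \<le> \<theta> * Y t \<omega>}"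
        proof (rule finite_measure_mono)
          show "{\<omega>\<in>space M. Y t \<omega> / t \<in> Cm} \<subseteq> {\<omega>\<in>space M. \<theta> * (t * a) \<le> \<theta> * Y t \<omega>}"
          proof safe
            fix \<omega> assume "\<omega> \<in> space M" "Y t \<omega> / t \<in> Cm"
            then have "Y t \<omega> / t \<le> a" unfolding a_def using bdd by (intro cSup_upper)
            then have "Y t \<omega> \<le> t * a" using t by (simp add: field_simps)
            then show "\<theta> * (t * a) \<le> \<theta> * Y t \<omega>" using th(1) by (intro mult_left_mono_neg)
          qed
        qed measurable
        then show "measure M {\<omega>\<in>space M. Y t \<omega> / t \<in> Cm} \<le> exp (- t * (y + g))" using m by linarith
      qed
      then show ?thesis using g(1) by blast
    qed
    obtain g1 where g1: "g1 > 0" "\<forall>\<^sub>F t in at_top. measure M {\<omega>\<in>space M. Y t \<omega> / t \<in> Cp} \<le> exp (- t * (y + g1))"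
      using hp by blast
    obtain g2 where g2: "g2 > 0" "\<forall>\<^sub>F t in at_top. measure M {\<omega>\<in>space M. Y t \<omega> / t \<in> Cm} \<le> exp (- t * (y + g2))"
      using hm by blast
    define g where "g = min g1 g2"
    have g: "0 < g" "g \<le> g1" "g \<le> g2" using g1 g2 by (auto simp: g_def)
    show ?thesis
      using eventually_conj[OF eventually_conj[OF g1(2) g2(2)] eventually_conj[OF eventually_gt_at_top[of 0] eventually_ge_at_top[of "1/g"]]]
    proof (rule eventually_mono, elim conjE)
      fix t :: real
      assume m1: "measure M {\<omega>\<in>space M. Y t \<omega> / t \<in> Cp} \<le> exp (- t * (y + g1))"
        and m2: "measure M {\<omega>\<in>space M. Y t \<omega> / t \<in> Cm} \<le> exp (- t * (y + g2))"
        and t: "0 < t" "1/g \<le> t"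
      have Cpm[measurable]: "Cp \<in> sets borel" "Cm \<in> sets borel" unfolding Cp_def Cm_def by auto
      have "{\<omega>\<in>space M. Y t \<omega> / t \<in> C} = {\<omega>\<in>space M. Y t \<omega> / t \<in> Cp} \<union> {\<omega>\<in>space M. Y t \<omega> / t \<in> Cm}"
      proof safe
        fix \<omega> assume "\<omega> \<in> space M" "Y t \<omega> / t \<in> C" "Y t \<omega> / t \<notin> Cm"
        then show "Y t \<omega> / t \<in> Cp" using rC[of "Y t \<omega> / t"] by (auto simp: Cp_def Cm_def)
      qed (auto simp: Cp_def Cm_def)
      then have "measure M {\<omega>\<in>space M. Y t \<omega> / t \<in> C} \<le>
          measure M {\<omega>\<in>space M. Y t \<omega> / t \<in> Cp} + measure M {\<omega>\<in>space M. Y t \<omega> / t \<in> Cm}"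
        by (simp only:) (rule measure_Un_le; measurable)
      also have "\<dots> \<le> exp (- t * (y + g)) + exp (- t * (y + g))"
      proof -
        have "exp (- t * (y + g1)) \<le> exp (- t * (y + g))" using t g by (simp add: mult_left_mono)
        moreover have "exp (- t * (y + g2)) \<le> exp (- t * (y + g))" using t g by (simp add: mult_left_mono)
        ultimately show ?thesis using m1 m2 by linarith
      qed
      also have "\<dots> = 2 * exp (- t * y) * exp (- t * g)" by (simp add: exp_add[symmetric] algebra_simps)
      also have "\<dots> \<le> 2 * exp (- t * y) * (1/2)"
        using exp_neg_half[OF g(1) t(2)] by (intro mult_left_mono) auto
      finally show "measure M {\<omega>\<in>space M. Y t \<omega> / t \<in> C} \<le> exp (- t * y)" by simp
    qed
  qed
qed


lemma GE_LDP:
  fixes Y :: "real \<Rightarrow> 'a \<Rightarrow> real" and \<Lambda> :: "real \<Rightarrow> real"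
  assumes P: "prob_space M"
    and meas: "\<And>t. Y t \<in> borel_measurable M"
    and int: "\<And>\<theta>. \<forall>\<^sub>F t in at_top. integrable M (\<lambda>\<omega>. exp (\<theta> * Y t \<omega>))"
    and lim: "\<And>\<theta>. ((\<lambda>t. ln (\<integral>\<omega>. exp (\<theta> * Y t \<omega>) \<partial>M) / t) \<longlongrightarrow> \<Lambda> \<theta>) at_top"
    and nn: "\<And>\<theta>. 0 \<le> \<Lambda> \<theta>" and z: "\<Lambda> 0 = 0"
    and lok: "\<And>x. \<exists>\<theta>. LOK \<Lambda> x \<theta>"
  shows "LDP M (\<lambda>t \<omega>. Y t \<omega> / t) (\<lambda>t. t) (Irate \<Lambda>)"
  unfolding LDP_def
proof (intro conjI allI impI)
  interpret prob_space M by fact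
  note [measurable] = meas
  show "0 \<le> Irate \<Lambda> x" for x using Irate_nonneg[of \<Lambda>] z by blast
  show "closed {x. Irate \<Lambda> x \<le> \<beta>}" for \<beta> by (rule Irate_closed)
  show "Limsup at_top (\<lambda>t. ereal (1 / t) * elog (measure M {\<omega> \<in> space M. Y t \<omega> / t \<in> C})) \<le> - (INF x\<in>C. Irate \<Lambda> x)"
    if C: "closed C" for C
    by (rule conv_upper) (rule upper_closed[OF P meas int lim nn z C])
  show "- (INF x\<in>U. Irate \<Lambda> x) \<le> Liminf at_top (\<lambda>t. ereal (1 / t) * elog (measure M {\<omega> \<in> space M. Y t \<omega> / t \<in> U}))"
    if U: "open U" for U
  proof -
    have Ub[measurable]: "U \<in> sets borel" using U by (simp add: borel_open)
    have "- Irate \<Lambda> x \<le> Liminf at_top (\<lambda>t. ereal (1 / t) * elog (measure M {\<omega> \<in> space M. Y t \<omega> / t \<in> U}))"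
      if x: "x \<in> U" for x
    proof (rule conv_lower)
      fix y assume y: "Irate \<Lambda> x < ereal y"
      obtain \<theta> where th: "LOK \<Lambda> x \<theta>" using lok by blast
      have "ereal (\<theta> * x - \<Lambda> \<theta>) < ereal y" using Irate_ge[of \<theta> x \<Lambda>] y by (rule order.strict_trans1)
      then have y': "\<theta> * x - \<Lambda> \<theta> < y" by simp
      obtain d where d: "d > 0" "ball x d \<subseteq> U" using U x open_contains_ball by blast
      show "\<forall>\<^sub>F t in at_top. exp (- t * y) \<le> measure M {\<omega> \<in> space M. Y t \<omega> / t \<in> U}"
        using lower_core[OF P meas int lim th y' d(1)]
      proof (rule eventually_mono)
        fix t assume h: "exp (- t * y) \<le> measure M {\<omega> \<in> space M. \<bar>Y t \<omega> / t - x\<bar> < d}"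
        have "measure M {\<omega> \<in> space M. \<bar>Y t \<omega> / t - x\<bar> < d} \<le> measure M {\<omega> \<in> space M. Y t \<omega> / t \<in> U}"
        proof (rule finite_measure_mono)
          show "{\<omega> \<in> space M. \<bar>Y t \<omega> / t - x\<bar> < d} \<subseteq> {\<omega> \<in> space M. Y t \<omega> / t \<in> U}"
            using d(2) by (auto simp: dist_real_def subset_eq abs_minus_commute)
        qed measurable
        then show "exp (- t * y) \<le> measure M {\<omega> \<in> space M. Y t \<omega> / t \<in> U}" using h by linarith
      qed
    qed
    then have "(SUP x\<in>U. - Irate \<Lambda> x) \<le> Liminf at_top (\<lambda>t. ereal (1 / t) * elog (measure M {\<omega> \<in> space M. Y t \<omega> / t \<in> U}))"
      by (rule SUP_least)
    then show ?thesis by (simp add: ereal_SUP_uminus_eq)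
  qed
qed

lemma Irate_good:
  shows "good_rate_function (Irate \<Lambda>)"
  unfolding good_rate_function_def
proof
  fix \<beta> :: real
  have sub: "{x. Irate \<Lambda> x \<le> ereal \<beta>} \<subseteq> {- (\<beta> + \<Lambda> (-1)) .. \<beta> + \<Lambda> 1}"
  proof
    fix x assume "x \<in> {x. Irate \<Lambda> x \<le> ereal \<beta>}"
    then have h: "Irate \<Lambda> x \<le> ereal \<beta>" by simp
    have "ereal (1 * x - \<Lambda> 1) \<le> ereal \<beta>" using Irate_ge[of 1 x \<Lambda>] h by (rule order.trans)
    moreover have "ereal ((-1) * x - \<Lambda> (-1)) \<le> ereal \<beta>" using Irate_ge[of "-1" x \<Lambda>] h by (rule order.trans)
    ultimately show "x \<in> {- (\<beta> + \<Lambda> (-1)) .. \<beta> + \<Lambda> 1}" by simp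
  qed
  have "closed {x. Irate \<Lambda> x \<le> ereal \<beta>}" by (rule Irate_closed)
  moreover have "bounded {x. Irate \<Lambda> x \<le> ereal \<beta>}"
    by (rule bounded_subset[OF _ sub]) simp
  ultimately show "compact {x. Irate \<Lambda> x \<le> ereal \<beta>}" by (simp add: compact_eq_bounded_closed)
qed

lemma I_LD1_Irate: "I_LD1 nu1 nu2 lam1 lam2 = Irate (Psi1 nu1 nu2 lam1 lam2)"
  by (simp add: fun_eq_iff I_LD1_def Irate_def)


lemma path_ne:
  fixes f :: "real \<Rightarrow> real" and t :: real
  assumes "\<not> (\<forall>n::nat. f (real n) \<le> t)"
  shows "{s. 0 \<le> s \<and> t < f s} \<noteq> {}"
proof -
  obtain n :: nat where "t < f (real n)" using assms by (auto simp: not_le)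
  then have "real n \<in> {s. 0 \<le> s \<and> t < f s}" by simp
  then show ?thesis by blast
qed

lemma path_bdd:
  fixes f :: "real \<Rightarrow> real" and t :: real
  shows "bdd_below {s. 0 \<le> s \<and> t < f s}"
  by (rule bdd_belowI[of _ 0]) auto

lemma path_L_nonneg:
  fixes f :: "real \<Rightarrow> real" and t :: real
  assumes "{s. 0 \<le> s \<and> t < f s} \<noteq> {}"
  shows "0 \<le> Inf {s. 0 \<le> s \<and> t < (f s::real)}"
  by (rule cInf_greatest[OF assms]) auto

lemma path_L_le:
  fixes f :: "real \<Rightarrow> real" and t :: real
  assumes "0 \<le> s" "t < f s"
  shows "Inf {s. 0 \<le> s \<and> t < f s} \<le> s"
  by (rule cInf_lower[OF _ path_bdd]) (use assms in auto)

lemma path_L_ge: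
  fixes f :: "real \<Rightarrow> real" and t :: real
  assumes m: "mono_on {0..} f" and "0 \<le> s" "f s \<le> t" and ne: "{s. 0 \<le> s \<and> t < f s} \<noteq> {}"
  shows "s \<le> Inf {s. 0 \<le> s \<and> t < (f s :: real)}"
proof (rule cInf_greatest[OF ne])
  fix r assume r: "r \<in> {s. 0 \<le> s \<and> t < f s}"
  show "s \<le> r"
  proof (rule ccontr)
    assume "\<not> s \<le> r"
    then have "f r \<le> f s" using m r assms(2) by (intro mono_onD[OF m]) auto
    then show False using r assms(3) by auto
  qed
qed

lemma le_eps_nat:
  fixes x s :: real
  assumes "\<And>n::nat. x \<le> s + 1 / (real n + 1)"
  shows "x \<le> s"
proof (rule ccontr)
  assume "\<not> x \<le> s"
  then have "0 < x - s" by simp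
  then obtain n where n: "inverse (real (Suc n)) < x - s" using reals_Archimedean by blast
  have "x \<le> s + 1 / (real n + 1)" by (rule assms)
  moreover have "1 / (real n + 1) = inverse (real (Suc n))" by (simp add: inverse_eq_divide)
  ultimately show False using n by linarith
qed

lemma path_L_le_iff:
  fixes f :: "real \<Rightarrow> real" and t :: real
  assumes m: "mono_on {0..} f" and ne: "{s. 0 \<le> s \<and> t < f s} \<noteq> {}"
  shows "Inf {s. 0 \<le> s \<and> t < (f s :: real)} \<le> s \<longleftrightarrow>
    (\<forall>n::nat. 0 \<le> s + 1 / (real n + 1) \<and> t < f (s + 1 / (real n + 1)))"
proof
  assume H: "Inf {s. 0 \<le> s \<and> t < f s} \<le> s"
  show "\<forall>n::nat. 0 \<le> s + 1 / (real n + 1) \<and> t < f (s + 1 / (real n + 1))"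
  proof
    fix n :: nat
    define r where "r = s + 1 / (real n + 1)"
    have "0 < 1 / (real n + 1)" by simp
    then have "Inf {s. 0 \<le> s \<and> t < f s} < r" using H unfolding r_def by linarith
    then obtain x where x: "0 \<le> x" "t < f x" "x < r"
      using cInf_less_iff[OF ne path_bdd] by auto
    have "f x \<le> f r" using x by (intro mono_onD[OF m]) auto
    then show "0 \<le> s + 1 / (real n + 1) \<and> t < f (s + 1 / (real n + 1))"
      using x unfolding r_def by auto
  qed
next
  assume H: "\<forall>n::nat. 0 \<le> s + 1 / (real n + 1) \<and> t < f (s + 1 / (real n + 1))"
  show "Inf {s. 0 \<le> s \<and> t < f s} \<le> s"
  proof (rule le_eps_nat)
    fix n :: nat show "Inf {s. 0 \<le> s \<and> t < f s} \<le> s + 1 / (real n + 1)"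
      using H by (intro path_L_le) auto
  qed
qed

definition Kp :: "(real \<Rightarrow> real) \<Rightarrow> real \<Rightarrow> nat" where
  "Kp f t = (LEAST k::nat. \<forall>n::nat. t < f (real k + 1 / (real n + 1)))"

lemma Kp_eq:
  fixes f :: "real \<Rightarrow> real" and t :: real
  assumes m: "mono_on {0..} f" and ne: "{s. 0 \<le> s \<and> t < f s} \<noteq> {}"
  shows "Kp f t = (LEAST k::nat. Inf {s. 0 \<le> s \<and> t < f s} \<le> real k)"
  unfolding Kp_def by (subst path_L_le_iff[OF m ne]) simp

lemma Kp_bounds:
  fixes f :: "real \<Rightarrow> real" and t :: real
  assumes m: "mono_on {0..} f" and ne: "{s. 0 \<le> s \<and> t < f s} \<noteq> {}"
  defines "L \<equiv> Inf {s. 0 \<le> s \<and> t < f s}"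
  shows "L \<le> real (Kp f t)" "real (Kp f t) \<le> L + 1" "real (Kp f t - 1) \<le> L" "L \<le> real (Kp f t - 1) + 1"
proof -
  obtain k where k: "L \<le> real k" using real_arch_simple by blast
  have K: "Kp f t = (LEAST k::nat. L \<le> real k)" unfolding L_def by (rule Kp_eq[OF m ne])
  show 1: "L \<le> real (Kp f t)" unfolding K by (rule LeastI[of _ k]) (rule k)
  have L0: "0 \<le> L" unfolding L_def by (rule path_L_nonneg[OF ne])
  have 2: "Kp f t = 0 \<or> real (Kp f t) - 1 < L"
  proof (cases "Kp f t")
    case (Suc j)
    then have "\<not> L \<le> real j" unfolding K by (metis lessI not_less_Least)
    then show ?thesis using Suc by auto
  qed simp
  show "real (Kp f t) \<le> L + 1" using 2 L0 by auto
  show "real (Kp f t - 1) \<le> L" using 2 L0 by (cases "Kp f t") auto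
  show "L \<le> real (Kp f t - 1) + 1" using 1 by (cases "Kp f t") auto
qed


locale stsub =
  fixes M :: "'a measure" and nu :: real and D :: "real \<Rightarrow> 'a \<Rightarrow> real"
  assumes SS: "stable_subordinator M nu D"
begin

lemma P: "prob_space M" using SS by (simp add: stable_subordinator_def)

sublocale prob_space M by (rule P)

lemma meas[measurable]: "D s \<in> borel_measurable M" using SS by (simp add: stable_subordinator_def)

lemma mono: "\<omega> \<in> space M \<Longrightarrow> mono_on {0..} (\<lambda>s. D s \<omega>)" using SS by (simp add: stable_subordinator_def)

lemma D0: "\<omega> \<in> space M \<Longrightarrow> D 0 \<omega> = 0" using SS by (simp add: stable_subordinator_def)

lemma Dnn: "\<omega> \<in> space M \<Longrightarrow> 0 \<le> s \<Longrightarrow> 0 \<le> D s \<omega>"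
  using mono_onD[OF mono, of \<omega> 0 s] D0 by auto

lemma lap: "0 \<le> s \<Longrightarrow> 0 \<le> u \<Longrightarrow> (\<integral>\<omega>. exp (- u * D s \<omega>) \<partial>M) = exp (- s * u powr nu)"
  using SS by (simp add: stable_subordinator_def)

lemma lap_int: "0 \<le> s \<Longrightarrow> 0 \<le> u \<Longrightarrow> integrable M (\<lambda>\<omega>. exp (- u * D s \<omega>))"
proof -
  assume s: "0 \<le> s" and u: "0 \<le> u"
  show ?thesis
  proof (rule Bochner_Integration.integrable_bound[of _ "\<lambda>_. 1::real"])
    show "AE \<omega> in M. norm (exp (- u * D s \<omega>)) \<le> norm (1::real)"
      using Dnn[OF _ s] u by (intro AE_I2) (auto simp: mult_nonneg_nonneg)
  qed auto
qed

lemma chernoff_D: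
  assumes s: "0 \<le> s" and u: "0 \<le> u"
  shows "measure M {\<omega>\<in>space M. D s \<omega> \<le> T} \<le> exp (u * T) * exp (- s * u powr nu)"
proof -
  have "measure M {\<omega>\<in>space M. D s \<omega> \<le> T} \<le> exp (- (- u) * T) * (\<integral>\<omega>. exp ((- u) * D s \<omega>) \<partial>M)"
    by (rule chernoff[OF P meas]) (use lap_int[OF s u] u in \<open>auto intro: mult_left_mono\<close>)
  then show ?thesis using lap[OF s u] by simp
qed

definition bad :: "real \<Rightarrow> 'a set" where
  "bad t = {\<omega>\<in>space M. \<forall>n::nat. D (real n) \<omega> \<le> t}"

lemma bad_sets[measurable]: "bad t \<in> sets M"
  unfolding bad_def by measurable

lemma bad_null: "measure M (bad t) = 0"
proof -
  have le: "measure M (bad t) \<le> exp (t - real n)" for n :: nat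
  proof -
    have "measure M (bad t) \<le> measure M {\<omega>\<in>space M. D (real n) \<omega> \<le> t}"
      by (rule finite_measure_mono) (auto simp: bad_def)
    also have "\<dots> \<le> exp (1 * t) * exp (- real n * 1 powr nu)"
      by (rule chernoff_D) auto
    also have "\<dots> = exp (t - real n)" by (simp add: exp_diff exp_minus field_simps)
    finally show ?thesis .
  qed
  have "((\<lambda>n::nat. exp (t - real n)) \<longlongrightarrow> 0) sequentially"
  proof -
    have "((\<lambda>n::nat. exp t * exp (- real n)) \<longlongrightarrow> exp t * 0) sequentially"
      by (intro tendsto_mult tendsto_const)
         (simp add: filterlim_compose[OF exp_at_bot] filterlim_uminus_at_bot filterlim_real_sequentially)
    then show ?thesis by (simp add: exp_diff exp_minus field_simps)
  qed
  then have "measure M (bad t) \<le> 0"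
    using le by (intro tendsto_lowerbound[of _ _ sequentially]) (auto intro: always_eventually)
  then show ?thesis using measure_nonneg[of M "bad t"] by linarith
qed

lemma not_bad_ne:
  assumes "\<omega> \<in> space M" "\<omega> \<notin> bad t"
  shows "{s. 0 \<le> s \<and> t < D s \<omega>} \<noteq> {}"
  by (rule path_ne[of "\<lambda>s. D s \<omega>"]) (use assms in \<open>auto simp: bad_def\<close>)

abbreviation L :: "real \<Rightarrow> 'a \<Rightarrow> real" where
  "L \<equiv> inverse_subordinator D"

lemma L_def': "L t \<omega> = Inf {s. 0 \<le> s \<and> t < D s \<omega>}"
  by (simp add: inverse_subordinator_def)

lemma L_bad: "\<omega> \<in> bad t \<Longrightarrow> L t \<omega> = Inf {}"
  unfolding L_def' bad_def
proof -
  assume "\<omega> \<in> {\<omega> \<in> space M. \<forall>n::nat. D (real n) \<omega> \<le> t}"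
  then have "{s. 0 \<le> s \<and> t < D s \<omega>} = {}"
  proof safe
    fix s assume H: "\<omega> \<in> space M" "\<forall>n::nat. D (real n) \<omega> \<le> t" "0 \<le> s" "t < D s \<omega>"
    obtain n :: nat where "s \<le> real n" using real_arch_simple by blast
    then have "D s \<omega> \<le> D (real n) \<omega>" using H by (intro mono_onD[OF mono]) auto
    moreover have "D (real n) \<omega> \<le> t" using H(2) by blast
    ultimately have False using H(4) by linarith
    then show "s \<in> {}" ..
  qed
  then show "Inf {s. 0 \<le> s \<and> t < D s \<omega>} = Inf {}" by (rule arg_cong[where f=Inf])
qed

lemma L_nonneg: "\<omega> \<in> space M \<Longrightarrow> \<omega> \<notin> bad t \<Longrightarrow> 0 \<le> L t \<omega>"
  unfolding L_def' by (rule path_L_nonneg[OF not_bad_ne])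

lemma L_le: "0 \<le> s \<Longrightarrow> t < D s \<omega> \<Longrightarrow> L t \<omega> \<le> s"
  unfolding L_def' by (rule path_L_le)

lemma L_ge: "\<omega> \<in> space M \<Longrightarrow> \<omega> \<notin> bad t \<Longrightarrow> 0 \<le> s \<Longrightarrow> D s \<omega> \<le> t \<Longrightarrow> s \<le> L t \<omega>"
  unfolding L_def' by (rule path_L_ge[OF mono _ _ not_bad_ne])

lemma L_meas[measurable]: "L t \<in> borel_measurable M"
proof (rule borel_measurableI_le)
  fix s
  have "{\<omega> \<in> space M. L t \<omega> \<le> s} =
     (bad t \<inter> {\<omega>\<in>space M. Inf ({}::real set) \<le> s}) \<union>
     ((space M - bad t) \<inter> {\<omega>\<in>space M. \<forall>n::nat. 0 \<le> s + 1 / (real n + 1) \<and> t < D (s + 1 / (real n + 1)) \<omega>})"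
  proof (intro set_eqI iffI)
    fix \<omega> assume "\<omega> \<in> {\<omega> \<in> space M. L t \<omega> \<le> s}"
    then show "\<omega> \<in> (bad t \<inter> {\<omega>\<in>space M. Inf ({}::real set) \<le> s}) \<union>
     ((space M - bad t) \<inter> {\<omega>\<in>space M. \<forall>n::nat. 0 \<le> s + 1 / (real n + 1) \<and> t < D (s + 1 / (real n + 1)) \<omega>})"
      using L_bad[of \<omega> t] path_L_le_iff[OF mono not_bad_ne, of \<omega> t s]
      by (cases "\<omega> \<in> bad t") (auto simp: L_def')
  next
    fix \<omega> assume "\<omega> \<in> (bad t \<inter> {\<omega>\<in>space M. Inf ({}::real set) \<le> s}) \<union>
     ((space M - bad t) \<inter> {\<omega>\<in>space M. \<forall>n::nat. 0 \<le> s + 1 / (real n + 1) \<and> t < D (s + 1 / (real n + 1)) \<omega>})"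
    then show "\<omega> \<in> {\<omega> \<in> space M. L t \<omega> \<le> s}"
      using L_bad[of \<omega> t] path_L_le_iff[OF mono not_bad_ne, of \<omega> t s]
      by (cases "\<omega> \<in> bad t") (auto simp: L_def' bad_def)
  qed
  also have "\<dots> \<in> sets M" by measurable
  finally show "{\<omega> \<in> space M. L t \<omega> \<le> s} \<in> sets M" .
qed

abbreviation KD :: "real \<Rightarrow> 'a \<Rightarrow> nat" where
  "KD t \<omega> \<equiv> Kp (\<lambda>s. D s \<omega>) t"

lemma KD_meas[measurable]: "(\<lambda>\<omega>. KD t \<omega>) \<in> measurable M (count_space UNIV)"
  unfolding Kp_def by measurable

lemma KD_bounds:
  assumes "\<omega> \<in> space M" "\<omega> \<notin> bad t"
  shows "L t \<omega> \<le> real (KD t \<omega>)" "real (KD t \<omega>) \<le> L t \<omega> + 1"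
    "real (KD t \<omega> - 1) \<le> L t \<omega>" "L t \<omega> \<le> real (KD t \<omega> - 1) + 1"
  using Kp_bounds[OF mono[OF assms(1)] not_bad_ne[OF assms]] unfolding L_def' by auto

end


lemma ennreal_le_suminf: "(f::nat\<Rightarrow>ennreal) n \<le> suminf f"
  using sum_le_suminf[OF summableI, of "{n}" f] by simp

lemma powr_conc:
  fixes x y \<nu> :: real
  assumes "0 < x" "x < y" "0 < \<nu>" "\<nu> < 1"
  shows "\<nu> * y powr (\<nu> - 1) * (y - x) < y powr \<nu> - x powr \<nu>"
    and "y powr \<nu> - x powr \<nu> < \<nu> * x powr (\<nu> - 1) * (y - x)"
proof -
  have "continuous_on {x..y} (\<lambda>z. z powr \<nu>)"
    using assms by (intro continuous_intros) auto
  moreover have "(\<lambda>z. z powr \<nu>) differentiable at z" if "x < z" "z < y" for z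
    using has_real_derivative_powr[of z \<nu>] that assms real_differentiable_def by force
  ultimately obtain l z where z: "x < z" "z < y" "((\<lambda>z. z powr \<nu>) has_real_derivative l) (at z)"
    "y powr \<nu> - x powr \<nu> = (y - x) * l"
    using MVT[OF assms(2)] by blast
  have l: "l = \<nu> * z powr (\<nu> - 1)"
    using DERIV_unique[OF z(3) has_real_derivative_powr[of z \<nu>]] z assms by auto
  have a: "y powr (\<nu> - 1) < z powr (\<nu> - 1)" using assms z by (intro powr_less_mono2_neg) auto
  have b: "z powr (\<nu> - 1) < x powr (\<nu> - 1)" using assms z by (intro powr_less_mono2_neg) auto
  have yx: "0 < y - x" using assms by simp
  have eq: "y powr \<nu> - x powr \<nu> = \<nu> * z powr (\<nu> - 1) * (y - x)" using z(4) l by simp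
  have "\<nu> * y powr (\<nu> - 1) * (y - x) < \<nu> * z powr (\<nu> - 1) * (y - x)"
    using mult_strict_left_mono[OF a \<open>0<\<nu>\<close>] yx by (intro mult_strict_right_mono) auto
  then show "\<nu> * y powr (\<nu> - 1) * (y - x) < y powr \<nu> - x powr \<nu>" using eq by linarith
  have "\<nu> * z powr (\<nu> - 1) * (y - x) < \<nu> * x powr (\<nu> - 1) * (y - x)"
    using mult_strict_left_mono[OF b \<open>0<\<nu>\<close>] yx by (intro mult_strict_right_mono) auto
  then show "y powr \<nu> - x powr \<nu> < \<nu> * x powr (\<nu> - 1) * (y - x)" using eq by linarith
qed

context stsub
begin

lemma bad_AE: "AE \<omega> in M. \<omega> \<notin> bad t"
proof (rule AE_not_in)
  show "bad t \<in> null_sets M"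
    using bad_null[of t] by (intro null_setsI) (auto simp: emeasure_eq_measure)
qed

lemma window:
  assumes s: "0 \<le> s" and v: "0 \<le> v" "v \<le> u" and w: "u \<le> w"
  shows "exp (u * T') * (exp (- s * u powr nu) - exp (- s * v powr nu) * exp (- (u - v) * T)
      - exp (- s * w powr nu) * exp ((w - u) * T')) \<le> measure M {\<omega>\<in>space M. D s \<omega> \<le> T}"
proof -
  have u: "0 \<le> u" using v by simp
  define A1 where "A1 = {\<omega>\<in>space M. T < D s \<omega>}"
  define A2 where "A2 = {\<omega>\<in>space M. D s \<omega> \<le> T'}"
  define A3 where "A3 = {\<omega>\<in>space M. D s \<omega> \<le> T}"
  have [measurable]: "A1 \<in> sets M" "A2 \<in> sets M" "A3 \<in> sets M" unfolding A1_def A2_def A3_def by measurable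
  have c1: "(u - v) * T \<le> (u - v) * D s \<omega>" if "\<omega> \<in> A1" for \<omega>
    using v that by (auto simp: A1_def intro: mult_left_mono)
  have int1: "integrable M (\<lambda>\<omega>. exp ((- u + (u - v)) * D s \<omega>))" using lap_int[OF s v(1)] by simp
  note t1 = tilt_integrable[OF meas int1 \<open>A1 \<in> sets M\<close> c1]
  have i1: "integrable M (\<lambda>\<omega>. indicator A1 \<omega> * exp ((- u) * D s \<omega>))" by (rule t1(1))
  have b1: "(\<integral>\<omega>. indicator A1 \<omega> * exp ((- u) * D s \<omega>) \<partial>M) \<le> exp (- (u - v) * T) * (\<integral>\<omega>. exp ((- u + (u - v)) * D s \<omega>) \<partial>M)"
    by (rule t1(2))
  have c2: "(u - w) * T' \<le> (u - w) * D s \<omega>" if "\<omega> \<in> A2" for \<omega>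
    using w that by (auto simp: A2_def intro: mult_left_mono_neg)
  have int2: "integrable M (\<lambda>\<omega>. exp ((- u + (u - w)) * D s \<omega>))" using lap_int[OF s, of w] u w by simp
  note t2 = tilt_integrable[OF meas int2 \<open>A2 \<in> sets M\<close> c2]
  have i2: "integrable M (\<lambda>\<omega>. indicator A2 \<omega> * exp ((- u) * D s \<omega>))" by (rule t2(1))
  have b2: "(\<integral>\<omega>. indicator A2 \<omega> * exp ((- u) * D s \<omega>) \<partial>M) \<le> exp (- (u - w) * T') * (\<integral>\<omega>. exp ((- u + (u - w)) * D s \<omega>) \<partial>M)"
    by (rule t2(2))
  have "integrable M (indicator A3 :: 'a \<Rightarrow> real)"
    by (rule integrable_real_indicator) (auto simp: less_top[symmetric])
  then have i3: "integrable M (\<lambda>\<omega>. indicator A3 \<omega> * exp (- u * T'))" by simp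
  have pw: "exp (- u * D s \<omega>) \<le> indicator A1 \<omega> * exp ((- u) * D s \<omega>) + indicator A2 \<omega> * exp ((- u) * D s \<omega>)
      + indicator A3 \<omega> * exp (- u * T')" if \<omega>: "\<omega> \<in> space M" for \<omega>
  proof (cases "T < D s \<omega>")
    case True then show ?thesis using \<omega> by (auto simp: A1_def indicator_def)
  next
    case False
    show ?thesis
    proof (cases "D s \<omega> \<le> T'")
      case True then show ?thesis using \<omega> by (auto simp: A2_def indicator_def)
    next
      case F2: False
      then have "- u * D s \<omega> \<le> - u * T'" using u by (intro mult_left_mono_neg) auto
      then show ?thesis using \<omega> False by (auto simp: A1_def A2_def A3_def indicator_def)
    qed
  qed
  have "exp (- s * u powr nu) = (\<integral>\<omega>. exp (- u * D s \<omega>) \<partial>M)" using lap[OF s u] by simp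
  also have "\<dots> \<le> (\<integral>\<omega>. indicator A1 \<omega> * exp ((- u) * D s \<omega>) + indicator A2 \<omega> * exp ((- u) * D s \<omega>)
      + indicator A3 \<omega> * exp (- u * T') \<partial>M)"
    by (intro integral_mono_AE lap_int s u Bochner_Integration.integrable_add i1 i2 i3 AE_I2 pw)
  also have "\<dots> = (\<integral>\<omega>. indicator A1 \<omega> * exp ((- u) * D s \<omega>) \<partial>M) + (\<integral>\<omega>. indicator A2 \<omega> * exp ((- u) * D s \<omega>) \<partial>M)
      + measure M A3 * exp (- u * T')"
    using i1 i2 i3 by (simp add: Bochner_Integration.integral_add)
  also have "\<dots> \<le> exp (- (u - v) * T) * exp (- s * v powr nu) + exp (- (u - w) * T') * exp (- s * w powr nu)
      + measure M A3 * exp (- u * T')"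
    using b1 b2 lap[OF s v(1)] lap[OF s, of w] u w by simp
  finally have "exp (- s * u powr nu) - exp (- s * v powr nu) * exp (- (u - v) * T)
      - exp (- s * w powr nu) * exp ((w - u) * T') \<le> measure M A3 * exp (- u * T')"
    by (simp add: algebra_simps)
  then have "exp (u * T') * (exp (- s * u powr nu) - exp (- s * v powr nu) * exp (- (u - v) * T)
      - exp (- s * w powr nu) * exp ((w - u) * T')) \<le> exp (u * T') * (measure M A3 * exp (- u * T'))"
    by (intro mult_left_mono) auto
  also have "\<dots> = measure M A3" by (simp add: exp_minus field_simps)
  finally show ?thesis unfolding A3_def .
qed

lemma tail_ge:
  assumes "0 \<le> s"
  shows "measure M {\<omega>\<in>space M. D s \<omega> \<le> t} \<le> measure M {\<omega>\<in>space M. s \<le> L t \<omega>}"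
proof -
  have "measure M {\<omega>\<in>space M. D s \<omega> \<le> t} \<le> measure M ({\<omega>\<in>space M. s \<le> L t \<omega>} \<union> bad t)"
    by (rule finite_measure_mono) (use L_ge assms in \<open>auto\<close>)
  also have "\<dots> \<le> measure M {\<omega>\<in>space M. s \<le> L t \<omega>} + measure M (bad t)"
    by (rule measure_Un_le) auto
  finally show ?thesis using bad_null by simp
qed

lemma tail_gt:
  assumes "0 \<le> s"
  shows "measure M {\<omega>\<in>space M. s < L t \<omega>} \<le> measure M {\<omega>\<in>space M. D s \<omega> \<le> t}"
proof -
  have "measure M {\<omega>\<in>space M. s < L t \<omega>} \<le> measure M ({\<omega>\<in>space M. D s \<omega> \<le> t} \<union> bad t)"
  proof (rule finite_measure_mono)
    show "{\<omega> \<in> space M. s < L t \<omega>} \<subseteq> {\<omega> \<in> space M. D s \<omega> \<le> t} \<union> bad t"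
    proof
      fix \<omega> assume H: "\<omega> \<in> {\<omega> \<in> space M. s < L t \<omega>}"
      show "\<omega> \<in> {\<omega> \<in> space M. D s \<omega> \<le> t} \<union> bad t"
      proof (cases "t < D s \<omega>")
        case True
        then have "L t \<omega> \<le> s" by (rule L_le[OF assms])
        then show ?thesis using H by auto
      next
        case False then show ?thesis using H by auto
      qed
    qed
  qed auto
  also have "\<dots> \<le> measure M {\<omega>\<in>space M. D s \<omega> \<le> t} + measure M (bad t)"
    by (rule measure_Un_le) auto
  finally show ?thesis using bad_null by simp
qed

lemma tail_le:
  assumes "0 \<le> s"
  shows "1 - measure M {\<omega>\<in>space M. D s \<omega> \<le> t} \<le> measure M {\<omega>\<in>space M. L t \<omega> \<le> s}"
proof -
  have "1 - measure M {\<omega>\<in>space M. D s \<omega> \<le> t} = measure M {\<omega>\<in>space M. t < D s \<omega>}"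
  proof -
    have "{\<omega>\<in>space M. t < D s \<omega>} = space M - {\<omega>\<in>space M. D s \<omega> \<le> t}" by auto
    then show ?thesis by (simp add: prob_compl)
  qed
  also have "\<dots> \<le> measure M {\<omega>\<in>space M. L t \<omega> \<le> s}"
    by (rule finite_measure_mono) (use L_le assms in auto)
  finally show ?thesis .
qed

end


definition EXPR :: "(real \<Rightarrow> ennreal) \<Rightarrow> real \<Rightarrow> bool" where
  "EXPR A \<rho> \<longleftrightarrow> (\<forall>\<epsilon>>0. \<forall>\<^sub>F t in at_top. ennreal (exp (t * (\<rho> - \<epsilon>))) \<le> A t \<and> A t \<le> ennreal (exp (t * (\<rho> + \<epsilon>))))"

context stsub
begin

definition MGL :: "real \<Rightarrow> real \<Rightarrow> ennreal" where
  "MGL t c = (\<integral>\<^sup>+\<omega>. ennreal (exp (c * L t \<omega>)) \<partial>M)"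

lemma MGL_upper:
  assumes c: "0 < c" and nu: "0 < nu" and e: "0 < \<epsilon>"
  shows "\<forall>\<^sub>F t in at_top. MGL t c \<le> ennreal (exp (t * (c powr (1/nu) + \<epsilon>)))"
proof -
  define \<rho> where "\<rho> = c powr (1/nu)"
  have \<rho>0: "0 < \<rho>" using c by (simp add: \<rho>_def)
  have \<rho>c: "\<rho> powr nu = c" using c nu by (simp add: \<rho>_def powr_powr)
  define u where "u = \<rho> + \<epsilon>/2"
  have u0: "0 < u" "\<rho> < u" using \<rho>0 e by (auto simp: u_def)
  have uc: "c < u powr nu" using powr_less_mono2[OF nu _ u0(2)] \<rho>0 \<rho>c by simp
  define q where "q = exp (c - u powr nu)"
  have q: "0 < q" "q < 1" using uc by (auto simp: q_def)
  define C where "C = exp c / (1 - q)"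
  have C0: "0 < C" using q by (simp add: C_def)
  have pw: "ennreal (exp (c * L t \<omega>)) \<le> 1 + (\<Sum>k. ennreal (exp (c * (real k + 1))) * indicator {\<omega>\<in>space M. real k < L t \<omega>} \<omega>)"
    if \<omega>: "\<omega> \<in> space M" "\<omega> \<notin> bad t" for t \<omega>
  proof -
    have L0: "0 \<le> L t \<omega>" by (rule L_nonneg[OF \<omega>])
    show ?thesis
    proof (cases "L t \<omega> = 0")
      case True then show ?thesis by simp
    next
      case False
      then have Lp: "0 < L t \<omega>" using L0 by simp
      define k where "k = nat (ceiling (L t \<omega>)) - 1"
      have ck: "1 \<le> ceiling (L t \<omega>)" using Lp by (simp add: one_le_ceiling)
      have n1: "1 \<le> nat (ceiling (L t \<omega>))" using nat_mono[OF ck] by simp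
      have "real k + 1 = real (nat (ceiling (L t \<omega>)))" unfolding k_def using n1 by (simp add: of_nat_diff)
      also have "\<dots> = real_of_int (ceiling (L t \<omega>))" using ck by simp
      finally have k1: "real k + 1 = real_of_int (ceiling (L t \<omega>))" .
      have "L t \<omega> \<le> real k + 1" using k1 by (simp add: le_of_int_ceiling)
      moreover have "real k < L t \<omega>" using k1 ceiling_less_iff[of "L t \<omega>"] by (smt (verit, ccfv_threshold) ceiling_correct)
      ultimately have "exp (c * L t \<omega>) \<le> exp (c * (real k + 1))" using c by simp
      then have "ennreal (exp (c * L t \<omega>)) \<le> ennreal (exp (c * (real k + 1))) * indicator {\<omega>\<in>space M. real k < L t \<omega>} \<omega>"
        using \<open>real k < L t \<omega>\<close> \<omega> by (simp add: ennreal_leI)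
      also have "\<dots> \<le> (\<Sum>k. ennreal (exp (c * (real k + 1))) * indicator {\<omega>\<in>space M. real k < L t \<omega>} \<omega>)"
        by (rule ennreal_le_suminf)
      also have "\<dots> \<le> 1 + (\<Sum>k. ennreal (exp (c * (real k + 1))) * indicator {\<omega>\<in>space M. real k < L t \<omega>} \<omega>)"
        by simp
      finally show ?thesis .
    qed
  qed
  have bound: "MGL t c \<le> ennreal (1 + C * exp (u * t))" for t
  proof -
    have "MGL t c \<le> (\<integral>\<^sup>+\<omega>. 1 + (\<Sum>k. ennreal (exp (c * (real k + 1))) * indicator {\<omega>\<in>space M. real k < L t \<omega>} \<omega>) \<partial>M)"
      unfolding MGL_def
    proof (rule nn_integral_mono_AE)
      show "AE \<omega> in M. ennreal (exp (c * L t \<omega>)) \<le> 1 + (\<Sum>k. ennreal (exp (c * (real k + 1))) * indicator {\<omega>\<in>space M. real k < L t \<omega>} \<omega>)"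
        using bad_AE[of t] by (rule AE_mp[OF _ AE_I2]) (auto intro: pw)
    qed
    also have "\<dots> = 1 + (\<Sum>k. ennreal (exp (c * (real k + 1))) * emeasure M {\<omega>\<in>space M. real k < L t \<omega>})"
      by (subst nn_integral_add) (auto simp: nn_integral_suminf nn_integral_cmult_indicator emeasure_space_1)
    also have "\<dots> \<le> 1 + (\<Sum>k. ennreal (exp (c + u * t) * q ^ k))"
    proof (intro add_left_mono suminf_le summableI)
      fix k :: nat
      have "measure M {\<omega>\<in>space M. real k < L t \<omega>} \<le> measure M {\<omega>\<in>space M. D (real k) \<omega> \<le> t}"
        by (rule tail_gt) simp
      also have "\<dots> \<le> exp (u * t) * exp (- real k * u powr nu)"
        by (rule chernoff_D) (use u0 in auto)
      finally have m: "measure M {\<omega>\<in>space M. real k < L t \<omega>} \<le> exp (u * t) * exp (- real k * u powr nu)" .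
      have "exp (c * (real k + 1)) * (exp (u * t) * exp (- real k * u powr nu)) = exp (c + u * t) * q ^ k"
        unfolding q_def by (simp add: exp_of_nat_mult[symmetric] exp_add[symmetric] algebra_simps)
      then have "exp (c * (real k + 1)) * measure M {\<omega>\<in>space M. real k < L t \<omega>} \<le> exp (c + u * t) * q ^ k"
        using mult_left_mono[OF m, of "exp (c * (real k + 1))"] by simp
      then show "ennreal (exp (c * (real k + 1))) * emeasure M {\<omega>\<in>space M. real k < L t \<omega>} \<le> ennreal (exp (c + u * t) * q ^ k)"
        by (simp add: emeasure_eq_measure ennreal_mult''[symmetric] ennreal_leI)
    qed
    also have "(\<Sum>k. ennreal (exp (c + u * t) * q ^ k)) = ennreal (exp (c + u * t) * (1 / (1 - q)))"
      using q by (intro suminf_ennreal_eq sums_mult geometric_sums) auto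
    also have "1 + ennreal (exp (c + u * t) * (1 / (1 - q))) = ennreal (1 + C * exp (u * t))"
      using q C0 by (subst ennreal_plus) (auto simp: C_def exp_add)
    finally show ?thesis .
  qed
  show ?thesis
    using eventually_conj[OF eventually_ge_at_top[of 0] eventually_ge_at_top[of "2 * ln (1 + C) / \<epsilon>"]]
  proof (rule eventually_mono, elim conjE)
    fix t :: real assume t0: "0 \<le> t" and t1: "2 * ln (1 + C) / \<epsilon> \<le> t"
    have "ln (1 + C) \<le> t * (\<epsilon> / 2)" using t1 e by (simp add: field_simps)
    moreover have "1 + C = exp (ln (1 + C))" using C0 by simp
    ultimately have a: "1 + C \<le> exp (t * (\<epsilon>/2))" by (metis exp_le_cancel_iff)
    have b: "1 \<le> exp (u * t)" using u0 t0 by simp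
    have "1 + C * exp (u * t) \<le> (1 + C) * exp (u * t)" using b by (simp add: algebra_simps)
    also have "\<dots> \<le> exp (t * (\<epsilon>/2)) * exp (u * t)" using a by (intro mult_right_mono) auto
    also have "\<dots> = exp (t * (c powr (1/nu) + \<epsilon>))" by (simp add: u_def \<rho>_def exp_add[symmetric] algebra_simps)
    finally have "1 + C * exp (u * t) \<le> exp (t * (c powr (1/nu) + \<epsilon>))" .
    then show "MGL t c \<le> ennreal (exp (t * (c powr (1/nu) + \<epsilon>)))"
      using bound[of t] by (meson ennreal_leI order_trans)
  qed
qed

lemma MGL_ge_tail:
  assumes c: "0 \<le> c" and s: "0 \<le> s"
  shows "ennreal (exp (c * s) * measure M {\<omega>\<in>space M. D s \<omega> \<le> t}) \<le> MGL t c"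
proof -
  have "ennreal (exp (c * s) * measure M {\<omega>\<in>space M. D s \<omega> \<le> t}) \<le> ennreal (exp (c * s) * measure M {\<omega>\<in>space M. s \<le> L t \<omega>})"
    using tail_ge[OF s, of t] by (intro ennreal_leI mult_left_mono) auto
  also have "\<dots> = (\<integral>\<^sup>+\<omega>. ennreal (exp (c * s)) * indicator {\<omega>\<in>space M. s \<le> L t \<omega>} \<omega> \<partial>M)"
    by (simp add: nn_integral_cmult_indicator emeasure_eq_measure ennreal_mult'')
  also have "\<dots> \<le> MGL t c"
    unfolding MGL_def
  proof (intro nn_integral_mono)
    fix \<omega> assume "\<omega> \<in> space M"
    show "ennreal (exp (c * s)) * indicator {\<omega>\<in>space M. s \<le> L t \<omega>} \<omega> \<le> ennreal (exp (c * L t \<omega>))"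
    proof (cases "s \<le> L t \<omega>")
      case True
      then have "exp (c * s) \<le> exp (c * L t \<omega>)" using c by (simp add: mult_left_mono)
      then show ?thesis using True \<open>\<omega> \<in> space M\<close> by (simp add: ennreal_leI)
    qed simp
  qed
  finally show ?thesis .
qed

lemma MGL_lower:
  assumes c: "0 < c" and nu: "0 < nu" "nu < 1" and e: "0 < \<epsilon>"
  shows "\<forall>\<^sub>F t in at_top. ennreal (exp (t * (c powr (1/nu) - \<epsilon>))) \<le> MGL t c"
proof -
  define \<rho> where "\<rho> = c powr (1/nu)"
  have \<rho>0: "0 < \<rho>" using c by (simp add: \<rho>_def)
  have \<rho>c: "\<rho> powr nu = c" using c nu by (simp add: \<rho>_def powr_powr)
  define a where "a = \<rho> powr (1 - nu) / nu"
  have a0: "0 < a" using \<rho>0 nu by (simp add: a_def)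
  have key: "a * (nu * \<rho> powr (nu - 1)) = 1"
    using \<rho>0 nu by (simp add: a_def powr_add[symmetric])
  define \<delta> where "\<delta> = min (1/2) (\<epsilon> / (4 * \<rho> + 1))"
  have \<delta>0: "0 < \<delta>" unfolding \<delta>_def using e \<rho>0 by simp
  have \<delta>1: "\<delta> \<le> 1/2" unfolding \<delta>_def by (rule min.cobounded1)
  have \<delta>2: "\<delta> \<le> \<epsilon> / (4 * \<rho> + 1)" unfolding \<delta>_def by (rule min.cobounded2)
  note \<delta> = \<delta>0 \<delta>1 \<delta>2
  define u where "u = \<rho> * (1 + \<delta>/4)"
  define w where "w = \<rho> * (1 + \<delta>/2)"
  have uw: "\<rho> < u" "u < w" "0 < u" using \<rho>0 \<delta> by (auto simp: u_def w_def)
  define \<kappa>1 where "\<kappa>1 = a * \<rho> powr nu + (u - \<rho>) - a * u powr nu"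
  have "u powr nu - \<rho> powr nu < nu * \<rho> powr (nu - 1) * (u - \<rho>)"
    by (rule powr_conc(2)) (use \<rho>0 uw nu in auto)
  then have "a * (u powr nu - \<rho> powr nu) < a * (nu * \<rho> powr (nu - 1) * (u - \<rho>))"
    using a0 by (intro mult_strict_left_mono) auto
  also have "\<dots> = u - \<rho>" using key by (simp add: mult.assoc[symmetric])
  finally have \<kappa>1: "0 < \<kappa>1" unfolding \<kappa>1_def by (simp add: algebra_simps)
  define \<kappa>2 where "\<kappa>2 = a * w powr nu - a * u powr nu - (w - u) * (1 - \<delta>)"
  have "nu * w powr (nu - 1) * (w - u) < w powr nu - u powr nu"
    by (rule powr_conc(1)) (use \<rho>0 uw nu in auto)
  then have I2: "a * (nu * w powr (nu - 1) * (w - u)) < a * (w powr nu - u powr nu)"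
    using a0 by (intro mult_strict_left_mono) auto
  have an: "a * nu = \<rho> powr (1 - nu)" using nu by (simp add: a_def)
  have wm: "w powr (nu - 1) = inverse (w powr (1 - nu))" using powr_minus[of w "1 - nu"] by simp
  have rw: "(\<rho> / w) powr (1 - nu) = \<rho> powr (1 - nu) / w powr (1 - nu)" using \<rho>0 uw by (simp add: powr_divide)
  have "a * nu * w powr (nu - 1) = (\<rho> / w) powr (1 - nu)"
    unfolding an wm rw by (simp add: divide_inverse)
  also have "(\<rho> / w) powr (1 - nu) \<ge> (\<rho> / w) powr 1"
    using \<rho>0 uw nu by (intro powr_mono') auto
  also have "(\<rho> / w) powr 1 = 1 / (1 + \<delta>/2)" using \<rho>0 uw \<delta> by (simp add: w_def)
  also have "1 / (1 + \<delta>/2) \<ge> 1 - \<delta>" using \<delta> by (simp add: field_simps)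
  finally have "1 - \<delta> \<le> a * nu * w powr (nu - 1)" .
  then have "(w - u) * (1 - \<delta>) \<le> (w - u) * (a * nu * w powr (nu - 1))"
    using uw by (intro mult_left_mono) auto
  then have \<kappa>2: "0 < \<kappa>2" using I2 unfolding \<kappa>2_def by (simp add: algebra_simps)
  define E where "E = c * a + u * (1 - \<delta>) - a * u powr nu"
  have "\<delta> * u \<le> \<epsilon> / 2"
  proof -
    have "u \<le> 2 * \<rho>" using \<delta> \<rho>0 by (simp add: u_def)
    then have "\<delta> * u \<le> \<delta> * (2 * \<rho>)" using \<delta> by (intro mult_left_mono) auto
    also have "\<dots> \<le> \<epsilon> / (4 * \<rho> + 1) * (2 * \<rho>)" using \<delta> \<rho>0 by (intro mult_right_mono) auto
    also have "\<dots> \<le> \<epsilon> / 2" using \<rho>0 e by (simp add: field_simps)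
    finally show ?thesis .
  qed
  then have E: "\<rho> - \<epsilon>/2 \<le> E" using \<kappa>1 \<rho>c unfolding E_def \<kappa>1_def by (simp add: algebra_simps)
  show ?thesis
    using eventually_conj[OF eventually_ge_at_top[of 0] eventually_conj[OF eventually_ge_at_top[of "4 / \<kappa>1"]
      eventually_conj[OF eventually_ge_at_top[of "4 / \<kappa>2"] eventually_ge_at_top[of "1 / (\<epsilon>/2)"]]]]
  proof (rule eventually_mono, elim conjE)
    fix t :: real assume t0: "0 \<le> t" and t1: "4 / \<kappa>1 \<le> t" and t2: "4 / \<kappa>2 \<le> t" and t3: "1 / (\<epsilon>/2) \<le> t"
    define s where "s = a * t"
    have s0: "0 \<le> s" using a0 t0 by (simp add: s_def)
    have W: "exp (u * ((1 - \<delta>) * t)) * (exp (- s * u powr nu) - exp (- s * \<rho> powr nu) * exp (- (u - \<rho>) * t)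
      - exp (- s * w powr nu) * exp ((w - u) * ((1 - \<delta>) * t))) \<le> measure M {\<omega>\<in>space M. D s \<omega> \<le> t}"
      by (rule window) (use s0 \<rho>0 uw in auto)
    have r1: "exp (- s * \<rho> powr nu) * exp (- (u - \<rho>) * t) = exp (- s * u powr nu) * exp (- t * \<kappa>1)"
      by (simp add: s_def \<kappa>1_def exp_add[symmetric] algebra_simps)
    have r2: "exp (- s * w powr nu) * exp ((w - u) * ((1 - \<delta>) * t)) = exp (- s * u powr nu) * exp (- t * \<kappa>2)"
      by (simp add: s_def \<kappa>2_def exp_add[symmetric] algebra_simps)
    have e1: "exp (- t * \<kappa>1) \<le> 1/4" by (rule exp_neg_small[OF \<kappa>1 t1])
    have e2: "exp (- t * \<kappa>2) \<le> 1/4" by (rule exp_neg_small[OF \<kappa>2 t2])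
    have e3: "exp (- t * (\<epsilon>/2)) \<le> 1/2" by (rule exp_neg_half) (use e t3 in auto)
    have "exp (u * ((1 - \<delta>) * t)) * exp (- s * u powr nu) * (1/2)
        \<le> exp (u * ((1 - \<delta>) * t)) * exp (- s * u powr nu) * (1 - exp (- t * \<kappa>1) - exp (- t * \<kappa>2))"
    proof (rule mult_left_mono)
      show "1/2 \<le> 1 - exp (- t * \<kappa>1) - exp (- t * \<kappa>2)" using e1 e2 by linarith
    qed simp
    also have "\<dots> = exp (u * ((1 - \<delta>) * t)) * (exp (- s * u powr nu) - exp (- s * \<rho> powr nu) * exp (- (u - \<rho>) * t)
      - exp (- s * w powr nu) * exp ((w - u) * ((1 - \<delta>) * t)))"
      unfolding r1 r2 by (simp add: algebra_simps)
    also have "\<dots> \<le> measure M {\<omega>\<in>space M. D s \<omega> \<le> t}" by (rule W)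
    finally have P: "exp (u * ((1 - \<delta>) * t)) * exp (- s * u powr nu) * (1/2) \<le> measure M {\<omega>\<in>space M. D s \<omega> \<le> t}" .
    have "exp (t * (c powr (1/nu) - \<epsilon>)) = exp (t * (\<rho> - \<epsilon>/2)) * exp (- t * (\<epsilon>/2))"
      by (simp add: \<rho>_def exp_add[symmetric] algebra_simps)
    also have "\<dots> \<le> exp (t * E) * (1/2)"
    proof (rule mult_mono)
      show "exp (t * (\<rho> - \<epsilon>/2)) \<le> exp (t * E)" using E t0 by (simp add: mult_left_mono)
    qed (use e3 in auto)
    also have "exp (t * E) * (1/2) = exp (c * s) * (exp (u * ((1 - \<delta>) * t)) * exp (- s * u powr nu) * (1/2))"
      by (simp add: E_def s_def exp_add[symmetric] algebra_simps)
    also have "\<dots> \<le> exp (c * s) * measure M {\<omega>\<in>space M. D s \<omega> \<le> t}"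
      using P by (intro mult_left_mono) auto
    finally have "ennreal (exp (t * (c powr (1/nu) - \<epsilon>))) \<le> ennreal (exp (c * s) * measure M {\<omega>\<in>space M. D s \<omega> \<le> t})"
      by (rule ennreal_leI)
    also have "\<dots> \<le> MGL t c" by (rule MGL_ge_tail) (use c s0 in auto)
    finally show "ennreal (exp (t * (c powr (1/nu) - \<epsilon>))) \<le> MGL t c" .
  qed
qed

end

lemma EXPR_I:
  assumes "\<And>\<epsilon>. 0 < \<epsilon> \<Longrightarrow> \<forall>\<^sub>F t in at_top. ennreal (exp (t * (\<rho> - \<epsilon>))) \<le> A t"
    "\<And>\<epsilon>. 0 < \<epsilon> \<Longrightarrow> \<forall>\<^sub>F t in at_top. A t \<le> ennreal (exp (t * (\<rho> + \<epsilon>)))"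
  shows "EXPR A \<rho>"
  unfolding EXPR_def using assms by (auto intro: eventually_conj)

lemma EXPR_D:
  assumes "EXPR A \<rho>" "0 < \<epsilon>"
  shows "\<forall>\<^sub>F t in at_top. ennreal (exp (t * (\<rho> - \<epsilon>))) \<le> A t \<and> A t \<le> ennreal (exp (t * (\<rho> + \<epsilon>)))"
  using assms unfolding EXPR_def by blast

lemma EXPR_const:
  assumes A: "EXPR A \<rho>" and K: "0 \<le> K"
    and B: "\<And>t. ennreal (exp (- K)) * A t \<le> B t" "\<And>t. B t \<le> ennreal (exp K) * A t"
  shows "EXPR B \<rho>"
proof (rule EXPR_I)
  fix \<epsilon> :: real assume e: "0 < \<epsilon>"
  have ev: "\<forall>\<^sub>F t in at_top. (ennreal (exp (t * (\<rho> - \<epsilon>/2))) \<le> A t \<and> A t \<le> ennreal (exp (t * (\<rho> + \<epsilon>/2)))) \<and> 2 * K / \<epsilon> \<le> t"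
    using e by (intro eventually_conj eventually_ge_at_top EXPR_D[OF A]) auto
  show "\<forall>\<^sub>F t in at_top. ennreal (exp (t * (\<rho> - \<epsilon>))) \<le> B t"
    using ev
  proof (rule eventually_mono, elim conjE)
    fix t assume a: "ennreal (exp (t * (\<rho> - \<epsilon>/2))) \<le> A t" and t: "2 * K / \<epsilon> \<le> t"
    have "K \<le> t * (\<epsilon>/2)" using t e by (simp add: field_simps)
    then have "exp (t * (\<rho> - \<epsilon>)) \<le> exp (- K) * exp (t * (\<rho> - \<epsilon>/2))"
      by (simp add: exp_add[symmetric] algebra_simps)
    then have "ennreal (exp (t * (\<rho> - \<epsilon>))) \<le> ennreal (exp (- K)) * ennreal (exp (t * (\<rho> - \<epsilon>/2)))"
      by (simp add: ennreal_mult''[symmetric] ennreal_leI)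
    also have "\<dots> \<le> ennreal (exp (- K)) * A t" using a by (intro mult_left_mono) auto
    also have "\<dots> \<le> B t" by (rule B(1))
    finally show "ennreal (exp (t * (\<rho> - \<epsilon>))) \<le> B t" .
  qed
  show "\<forall>\<^sub>F t in at_top. B t \<le> ennreal (exp (t * (\<rho> + \<epsilon>)))"
    using ev
  proof (rule eventually_mono, elim conjE)
    fix t assume a: "A t \<le> ennreal (exp (t * (\<rho> + \<epsilon>/2)))" and t: "2 * K / \<epsilon> \<le> t"
    have "K \<le> t * (\<epsilon>/2)" using t e by (simp add: field_simps)
    then have "exp K * exp (t * (\<rho> + \<epsilon>/2)) \<le> exp (t * (\<rho> + \<epsilon>))"
      by (simp add: exp_add[symmetric] algebra_simps)
    have "B t \<le> ennreal (exp K) * A t" by (rule B(2))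
    also have "\<dots> \<le> ennreal (exp K) * ennreal (exp (t * (\<rho> + \<epsilon>/2)))" using a by (intro mult_left_mono) auto
    also have "\<dots> \<le> ennreal (exp (t * (\<rho> + \<epsilon>)))"
      using \<open>exp K * exp (t * (\<rho> + \<epsilon>/2)) \<le> exp (t * (\<rho> + \<epsilon>))\<close>
      by (simp add: ennreal_mult''[symmetric] ennreal_leI)
    finally show "B t \<le> ennreal (exp (t * (\<rho> + \<epsilon>)))" .
  qed
qed

lemma EXPR_mult:
  assumes A: "EXPR A \<rho>1" and B: "EXPR B \<rho>2"
  shows "EXPR (\<lambda>t. A t * B t) (\<rho>1 + \<rho>2)"
proof (rule EXPR_I)
  fix \<epsilon> :: real assume e: "0 < \<epsilon>"
  have ev: "\<forall>\<^sub>F t in at_top. (ennreal (exp (t * (\<rho>1 - \<epsilon>/2))) \<le> A t \<and> A t \<le> ennreal (exp (t * (\<rho>1 + \<epsilon>/2))))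
     \<and> (ennreal (exp (t * (\<rho>2 - \<epsilon>/2))) \<le> B t \<and> B t \<le> ennreal (exp (t * (\<rho>2 + \<epsilon>/2))))"
    using e by (intro eventually_conj EXPR_D[OF A] EXPR_D[OF B]) auto
  show "\<forall>\<^sub>F t in at_top. ennreal (exp (t * (\<rho>1 + \<rho>2 - \<epsilon>))) \<le> A t * B t"
    using ev
  proof (rule eventually_mono, elim conjE)
    fix t assume a: "ennreal (exp (t * (\<rho>1 - \<epsilon>/2))) \<le> A t" and b: "ennreal (exp (t * (\<rho>2 - \<epsilon>/2))) \<le> B t"
    have "ennreal (exp (t * (\<rho>1 + \<rho>2 - \<epsilon>))) = ennreal (exp (t * (\<rho>1 - \<epsilon>/2))) * ennreal (exp (t * (\<rho>2 - \<epsilon>/2)))"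
      by (simp add: ennreal_mult''[symmetric] exp_add[symmetric] algebra_simps)
    also have "\<dots> \<le> A t * B t" using a b by (rule mult_mono) auto
    finally show "ennreal (exp (t * (\<rho>1 + \<rho>2 - \<epsilon>))) \<le> A t * B t" .
  qed
  show "\<forall>\<^sub>F t in at_top. A t * B t \<le> ennreal (exp (t * (\<rho>1 + \<rho>2 + \<epsilon>)))"
    using ev
  proof (rule eventually_mono, elim conjE)
    fix t assume a: "A t \<le> ennreal (exp (t * (\<rho>1 + \<epsilon>/2)))" and b: "B t \<le> ennreal (exp (t * (\<rho>2 + \<epsilon>/2)))"
    have "A t * B t \<le> ennreal (exp (t * (\<rho>1 + \<epsilon>/2))) * ennreal (exp (t * (\<rho>2 + \<epsilon>/2)))"
      using a b by (rule mult_mono) auto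
    also have "\<dots> = ennreal (exp (t * (\<rho>1 + \<rho>2 + \<epsilon>)))"
      by (simp add: ennreal_mult''[symmetric] exp_add[symmetric] algebra_simps)
    finally show "A t * B t \<le> ennreal (exp (t * (\<rho>1 + \<rho>2 + \<epsilon>)))" .
  qed
qed

lemma EXPR_lim:
  assumes A: "EXPR A \<rho>"
  shows "((\<lambda>t. ln (enn2real (A t)) / t) \<longlongrightarrow> \<rho>) at_top"
    and "\<forall>\<^sub>F t in at_top. A t < \<top>"
proof -
  show "((\<lambda>t. ln (enn2real (A t)) / t) \<longlongrightarrow> \<rho>) at_top"
  proof (rule tendstoI)
    fix \<epsilon> :: real assume e: "0 < \<epsilon>"
    have ev: "\<forall>\<^sub>F t in at_top. (ennreal (exp (t * (\<rho> - \<epsilon>/2))) \<le> A t \<and> A t \<le> ennreal (exp (t * (\<rho> + \<epsilon>/2)))) \<and> 0 < t"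
      using e by (intro eventually_conj eventually_gt_at_top EXPR_D[OF A]) auto
    show "\<forall>\<^sub>F t in at_top. dist (ln (enn2real (A t)) / t) \<rho> < \<epsilon>"
      using ev
    proof (rule eventually_mono, elim conjE)
      fix t :: real assume a: "ennreal (exp (t * (\<rho> - \<epsilon>/2))) \<le> A t" and b: "A t \<le> ennreal (exp (t * (\<rho> + \<epsilon>/2)))"
        and t: "0 < t"
      have fin: "A t \<noteq> \<top>" using b by (auto simp: top_unique)
      have "exp (t * (\<rho> - \<epsilon>/2)) \<le> enn2real (A t)"
        using a fin by (metis enn2real_ennreal enn2real_mono exp_ge_zero less_top)
      moreover have "enn2real (A t) \<le> exp (t * (\<rho> + \<epsilon>/2))"
        using b by (metis enn2real_ennreal enn2real_mono exp_ge_zero ennreal_neq_top less_top)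
      ultimately have l1: "t * (\<rho> - \<epsilon>/2) \<le> ln (enn2real (A t))" and l2: "ln (enn2real (A t)) \<le> t * (\<rho> + \<epsilon>/2)"
        by (metis exp_gt_zero ln_exp ln_mono less_le_trans)+
      have "\<rho> - \<epsilon>/2 \<le> ln (enn2real (A t)) / t" using l1 t by (simp add: le_divide_eq mult.commute)
      moreover have "ln (enn2real (A t)) / t \<le> \<rho> + \<epsilon>/2" using l2 t by (simp add: divide_le_eq mult.commute)
      ultimately show "dist (ln (enn2real (A t)) / t) \<rho> < \<epsilon>" using e by (simp add: dist_real_def abs_if)
    qed
  qed
  show "\<forall>\<^sub>F t in at_top. A t < \<top>"
    using EXPR_D[OF A, of 1] by (rule eventually_mono) (auto simp: less_top[symmetric] top_unique)
qed


context stsub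
begin

lemma MGL_nonpos_upper:
  assumes c: "c \<le> 0"
  shows "MGL t c \<le> 1"
proof -
  have "MGL t c \<le> (\<integral>\<^sup>+\<omega>. 1 \<partial>M)"
    unfolding MGL_def
  proof (rule nn_integral_mono_AE)
    show "AE \<omega> in M. ennreal (exp (c * L t \<omega>)) \<le> 1"
      using bad_AE[of t]
    proof (rule AE_mp[OF _ AE_I2], intro impI)
      fix \<omega> assume "\<omega> \<in> space M" "\<omega> \<notin> bad t"
      then have "0 \<le> L t \<omega>" by (rule L_nonneg)
      then have "c * L t \<omega> \<le> 0" using c by (simp add: mult_nonpos_nonneg)
      then show "ennreal (exp (c * L t \<omega>)) \<le> 1" by simp
    qed
  qed
  then show ?thesis by (simp add: emeasure_space_1)
qed

lemma MGL_nonpos_lower: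
  assumes c: "c \<le> 0" and nu: "0 < nu" "nu < 1" and e: "0 < \<epsilon>"
  shows "\<forall>\<^sub>F t in at_top. ennreal (exp (t * (0 - \<epsilon>))) \<le> MGL t c"
proof -
  define \<sigma> where "\<sigma> = \<epsilon> / (2 * (\<bar>c\<bar> + 1))"
  have \<sigma>0: "0 < \<sigma>" using e by (simp add: \<sigma>_def)
  have "\<bar>c\<bar> * \<sigma> \<le> (\<bar>c\<bar> + 1) * \<sigma>" using \<sigma>0 by (intro mult_right_mono) auto
  also have "\<dots> = \<epsilon> / 2" by (simp add: \<sigma>_def field_simps)
  finally have cs: "\<bar>c\<bar> * \<sigma> \<le> \<epsilon> / 2" .
  have "c * \<sigma> = - (\<bar>c\<bar> * \<sigma>)" using c by simp
  then have c\<sigma>: "- (\<epsilon>/2) \<le> c * \<sigma>" using cs by linarith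
  define u where "u = (\<sigma>/2) powr (1 / (1 - nu))"
  have u0: "0 < u" using \<sigma>0 by (simp add: u_def)
  have u1: "u powr (1 - nu) = \<sigma>/2" using \<sigma>0 nu by (simp add: u_def powr_powr)
  have uu: "u = u powr nu * u powr (1 - nu)" using u0 by (simp add: powr_add[symmetric])
  define \<kappa> where "\<kappa> = \<sigma> * u powr nu - u"
  have \<kappa>: "0 < \<kappa>"
  proof -
    have "\<kappa> = u powr nu * (\<sigma>/2)" unfolding \<kappa>_def using uu u1 by (simp add: algebra_simps)
    moreover have "0 < u powr nu * (\<sigma>/2)" using u0 \<sigma>0 by simp
    ultimately show ?thesis by simp
  qed
  show ?thesis
    using eventually_conj[OF eventually_ge_at_top[of 0] eventually_conj[OF eventually_ge_at_top[of "1/\<kappa>"]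
      eventually_ge_at_top[of "1/(\<epsilon>/2)"]]]
  proof (rule eventually_mono, elim conjE)
    fix t :: real assume t0: "0 \<le> t" and t1: "1/\<kappa> \<le> t" and t2: "1/(\<epsilon>/2) \<le> t"
    define s where "s = \<sigma> * t"
    have s0: "0 \<le> s" using \<sigma>0 t0 by (simp add: s_def)
    have "measure M {\<omega>\<in>space M. D s \<omega> \<le> t} \<le> exp (u * t) * exp (- s * u powr nu)"
      by (rule chernoff_D) (use s0 u0 in auto)
    also have "\<dots> = exp (- t * \<kappa>)" by (simp add: s_def \<kappa>_def exp_add[symmetric] algebra_simps)
    also have "\<dots> \<le> 1/2" by (rule exp_neg_half[OF \<kappa> t1])
    finally have "1/2 \<le> measure M {\<omega>\<in>space M. L t \<omega> \<le> s}" using tail_le[OF s0, of t] by linarith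
    have e3: "exp (- t * (\<epsilon>/2)) \<le> 1/2" by (rule exp_neg_half) (use e t2 in auto)
    have "exp (t * (0 - \<epsilon>)) = exp (- t * (\<epsilon>/2)) * exp (- t * (\<epsilon>/2))"
      by (simp add: exp_add[symmetric])
    also have "\<dots> \<le> exp (c * s) * (1/2)"
    proof (rule mult_mono)
      have "t * (- (\<epsilon>/2)) \<le> t * (c * \<sigma>)" using c\<sigma> t0 by (intro mult_left_mono) auto
      then show "exp (- t * (\<epsilon>/2)) \<le> exp (c * s)" by (simp add: s_def algebra_simps)
    qed (use e3 in auto)
    also have "\<dots> \<le> exp (c * s) * measure M {\<omega>\<in>space M. L t \<omega> \<le> s}"
      using \<open>1/2 \<le> _\<close> by (intro mult_left_mono) auto
    finally have r: "exp (t * (0 - \<epsilon>)) \<le> exp (c * s) * measure M {\<omega>\<in>space M. L t \<omega> \<le> s}" .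
    have "ennreal (exp (c * s) * measure M {\<omega>\<in>space M. L t \<omega> \<le> s})
        = (\<integral>\<^sup>+\<omega>. ennreal (exp (c * s)) * indicator {\<omega>\<in>space M. L t \<omega> \<le> s} \<omega> \<partial>M)"
      by (simp add: nn_integral_cmult_indicator emeasure_eq_measure ennreal_mult'')
    also have "\<dots> \<le> MGL t c"
      unfolding MGL_def
    proof (intro nn_integral_mono)
      fix \<omega> assume "\<omega> \<in> space M"
      show "ennreal (exp (c * s)) * indicator {\<omega>\<in>space M. L t \<omega> \<le> s} \<omega> \<le> ennreal (exp (c * L t \<omega>))"
      proof (cases "L t \<omega> \<le> s")
        case True
        then have "exp (c * s) \<le> exp (c * L t \<omega>)" using c by (simp add: mult_left_mono_neg)
        then show ?thesis using True \<open>\<omega> \<in> space M\<close> by (simp add: ennreal_leI)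
      qed simp
    qed
    finally show "ennreal (exp (t * (0 - \<epsilon>))) \<le> MGL t c" using r by (meson ennreal_leI order_trans)
  qed
qed

lemma EXPR_MGL:
  assumes nu: "0 < nu" "nu < 1"
  shows "EXPR (\<lambda>t. MGL t c) ((max 0 c) powr (1/nu))"
proof (cases "0 < c")
  case True
  then show ?thesis using MGL_lower[OF True nu] MGL_upper[OF True nu(1)] by (intro EXPR_I) auto
next
  case False
  then have c: "c \<le> 0" by simp
  have m0: "max 0 c powr (1 / nu) = 0" using c by simp
  show ?thesis
  proof (rule EXPR_I)
    fix \<epsilon> :: real assume e: "0 < \<epsilon>"
    show "\<forall>\<^sub>F t in at_top. ennreal (exp (t * (max 0 c powr (1 / nu) - \<epsilon>))) \<le> MGL t c"
      using MGL_nonpos_lower[OF c nu e] unfolding m0 by simp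
    show "\<forall>\<^sub>F t in at_top. MGL t c \<le> ennreal (exp (t * (max 0 c powr (1 / nu) + \<epsilon>)))"
      using eventually_ge_at_top[of 0]
    proof (rule eventually_mono)
      fix t :: real assume "0 \<le> t"
      then have "1 \<le> exp (t * \<epsilon>)" using e by simp
      then show "MGL t c \<le> ennreal (exp (t * (max 0 c powr (1 / nu) + \<epsilon>)))"
        using MGL_nonpos_upper[OF c, of t] unfolding m0 by (simp add: ennreal_leI order_trans)
    qed
  qed
qed

definition MGK :: "bool \<Rightarrow> real \<Rightarrow> real \<Rightarrow> ennreal" where
  "MGK b t c = (\<integral>\<^sup>+\<omega>. ennreal (exp (c * real (if b then KD t \<omega> else KD t \<omega> - 1))) \<partial>M)"

lemma EXPR_MGK:
  assumes nu: "0 < nu" "nu < 1"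
  shows "EXPR (\<lambda>t. MGK b t c) ((max 0 c) powr (1/nu))"
proof (rule EXPR_const[OF EXPR_MGL[OF nu, of c], of "\<bar>c\<bar>"])
  fix t
  have pw: "exp (- \<bar>c\<bar>) * exp (c * L t \<omega>) \<le> exp (c * real (if b then KD t \<omega> else KD t \<omega> - 1))
    \<and> exp (c * real (if b then KD t \<omega> else KD t \<omega> - 1)) \<le> exp \<bar>c\<bar> * exp (c * L t \<omega>)"
    if \<omega>: "\<omega> \<in> space M" "\<omega> \<notin> bad t" for \<omega>
  proof -
    define K where "K = real (if b then KD t \<omega> else KD t \<omega> - 1)"
    have "\<bar>K - L t \<omega>\<bar> \<le> 1" using KD_bounds[OF \<omega>] by (auto simp: K_def)
    then have "\<bar>c * K - c * L t \<omega>\<bar> \<le> \<bar>c\<bar>"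
      by (metis abs_mult mult.right_neutral mult_left_mono right_diff_distrib abs_ge_zero)
    then have "- \<bar>c\<bar> + c * L t \<omega> \<le> c * K" "c * K \<le> \<bar>c\<bar> + c * L t \<omega>" by linarith+
    then show ?thesis unfolding K_def[symmetric] by (simp add: exp_add[symmetric])
  qed
  have "ennreal (exp (- \<bar>c\<bar>)) * MGL t c = (\<integral>\<^sup>+\<omega>. ennreal (exp (- \<bar>c\<bar>) * exp (c * L t \<omega>)) \<partial>M)"
    unfolding MGL_def by (subst nn_integral_cmult[symmetric]) (auto simp: ennreal_mult'')
  also have "\<dots> \<le> MGK b t c"
    unfolding MGK_def
    by (rule nn_integral_mono_AE, rule AE_mp[OF bad_AE[of t] AE_I2]) (use pw in \<open>auto intro: ennreal_leI\<close>)
  finally show "ennreal (exp (- \<bar>c\<bar>)) * MGL t c \<le> MGK b t c" .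
  have "MGK b t c \<le> (\<integral>\<^sup>+\<omega>. ennreal (exp \<bar>c\<bar> * exp (c * L t \<omega>)) \<partial>M)"
    unfolding MGK_def
    by (rule nn_integral_mono_AE, rule AE_mp[OF bad_AE[of t] AE_I2]) (use pw in \<open>auto intro: ennreal_leI\<close>)
  also have "\<dots> = ennreal (exp \<bar>c\<bar>) * MGL t c"
    unfolding MGL_def by (subst nn_integral_cmult[symmetric]) (auto simp: ennreal_mult'')
  finally show "MGK b t c \<le> ennreal (exp \<bar>c\<bar>) * MGL t c" .
qed simp

end


locale pois =
  fixes M :: "'a measure" and lam :: real and N :: "real \<Rightarrow> 'a \<Rightarrow> real"
  assumes PP: "poisson_process M lam N"
begin

lemma P: "prob_space M" using PP by (simp add: poisson_process_def)

sublocale prob_space M by (rule P)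

lemma lam0: "0 < lam" using PP by (simp add: poisson_process_def)

lemma measN[measurable]: "N s \<in> borel_measurable M" using PP by (simp add: poisson_process_def)

lemma N0: "\<omega> \<in> space M \<Longrightarrow> N 0 \<omega> = 0" using PP by (simp add: poisson_process_def)

lemma Nnat: "\<omega> \<in> space M \<Longrightarrow> N s \<omega> \<in> \<nat>" using PP by (simp add: poisson_process_def)

lemma Nmono: "\<omega> \<in> space M \<Longrightarrow> mono_on {0..} (\<lambda>s. N s \<omega>)" using PP by (simp add: poisson_process_def)

lemma Nrc: "\<omega> \<in> space M \<Longrightarrow> 0 \<le> s \<Longrightarrow> continuous (at_right s) (\<lambda>r. N r \<omega>)"
  using PP by (simp add: poisson_process_def)

lemma Npmf: "0 < s \<Longrightarrow> measure M {\<omega>\<in>space M. N s \<omega> = real j} = (lam * s) ^ j / fact j * exp (- (lam * s))"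
proof -
  assume s: "0 < s"
  have "measure M {\<omega>\<in>space M. N s \<omega> - N 0 \<omega> = real j} = (lam * (s - 0)) ^ j / fact j * exp (- (lam * (s - 0)))"
    using PP s unfolding poisson_process_def by blast
  moreover have "{\<omega>\<in>space M. N s \<omega> - N 0 \<omega> = real j} = {\<omega>\<in>space M. N s \<omega> = real j}"
    using N0 by auto
  ultimately show ?thesis by simp
qed

lemma single_sum:
  fixes f :: "nat \<Rightarrow> ennreal"
  assumes "\<And>j. j \<noteq> j0 \<Longrightarrow> f j = 0"
  shows "suminf f = f j0"
  using suminf_finite[of "{j0}" f] assms by auto

lemma N_sum:
  assumes "\<omega> \<in> space M"
  shows "ennreal (exp (\<theta> * N s \<omega>)) = (\<Sum>j. ennreal (exp (\<theta> * real j)) * indicator {\<omega>\<in>space M. N s \<omega> = real j} \<omega>)"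
proof -
  obtain j0 :: nat where j0: "N s \<omega> = real j0" using Nnat[OF assms, of s] by (auto elim: Nats_cases)
  have "(\<Sum>j. ennreal (exp (\<theta> * real j)) * indicator {\<omega>\<in>space M. N s \<omega> = real j} \<omega>)
     = ennreal (exp (\<theta> * real j0)) * indicator {\<omega>\<in>space M. N s \<omega> = real j0} \<omega>"
    by (rule single_sum) (use j0 in auto)
  also have "\<dots> = ennreal (exp (\<theta> * N s \<omega>))" using j0 assms by simp
  finally show ?thesis by simp
qed

lemma pois_mgf:
  "(\<integral>\<^sup>+\<omega>. ennreal (exp (\<theta> * N (real k) \<omega>)) \<partial>M) = ennreal (exp (lam * real k * (exp \<theta> - 1)))"
proof (cases "k = 0")
  case True
  then have "(\<integral>\<^sup>+\<omega>. ennreal (exp (\<theta> * N (real k) \<omega>)) \<partial>M) = (\<integral>\<^sup>+\<omega>. 1 \<partial>M)"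
    by (intro nn_integral_cong) (simp add: N0)
  then show ?thesis using True by (simp add: emeasure_space_1)
next
  case False
  define s where "s = real k"
  have s: "0 < s" using False by (simp add: s_def)
  have "(\<integral>\<^sup>+\<omega>. ennreal (exp (\<theta> * N s \<omega>)) \<partial>M)
     = (\<integral>\<^sup>+\<omega>. (\<Sum>j. ennreal (exp (\<theta> * real j)) * indicator {\<omega>\<in>space M. N s \<omega> = real j} \<omega>) \<partial>M)"
    by (intro nn_integral_cong N_sum)
  also have "\<dots> = (\<Sum>j. ennreal (exp (\<theta> * real j)) * emeasure M {\<omega>\<in>space M. N s \<omega> = real j})"
    by (simp add: nn_integral_suminf nn_integral_cmult_indicator)
  also have "\<dots> = (\<Sum>j. ennreal (exp (- (lam * s)) * ((exp \<theta> * (lam * s)) ^ j / fact j)))"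
  proof (intro suminf_cong)
    fix j :: nat
    have "exp (\<theta> * real j) * ((lam * s) ^ j / fact j * exp (- (lam * s))) = exp (- (lam * s)) * ((exp \<theta> * (lam * s)) ^ j / fact j)"
      by (simp add: exp_of_nat_mult[symmetric] power_mult_distrib mult.commute)
    note eq = this
    show "ennreal (exp (\<theta> * real j)) * emeasure M {\<omega>\<in>space M. N s \<omega> = real j} = ennreal (exp (- (lam * s)) * ((exp \<theta> * (lam * s)) ^ j / fact j))"
    proof -
      have nn: "0 \<le> (lam * s) ^ j / fact j * exp (- (lam * s))" using s lam0 by simp
      have "ennreal (exp (\<theta> * real j)) * emeasure M {\<omega>\<in>space M. N s \<omega> = real j}
          = ennreal (exp (\<theta> * real j)) * ennreal ((lam * s) ^ j / fact j * exp (- (lam * s)))"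
        using s by (simp add: emeasure_eq_measure Npmf)
      also have "\<dots> = ennreal (exp (\<theta> * real j) * ((lam * s) ^ j / fact j * exp (- (lam * s))))"
        by (rule ennreal_mult[symmetric]) (use nn in auto)
      finally show ?thesis by (simp only: eq)
    qed
  qed
  also have "\<dots> = ennreal (exp (- (lam * s)) * exp (exp \<theta> * (lam * s)))"
  proof (rule suminf_ennreal_eq)
    show "(\<lambda>j. exp (- (lam * s)) * ((exp \<theta> * (lam * s)) ^ j / fact j)) sums (exp (- (lam * s)) * exp (exp \<theta> * (lam * s)))"
    proof (intro sums_mult)
      show "(\<lambda>n. (exp \<theta> * (lam * s)) ^ n / fact n) sums exp (exp \<theta> * (lam * s))"
        using exp_converges[of "exp \<theta> * (lam * s)"] by (simp add: field_simps)
    qed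
    show "0 \<le> exp (- (lam * s)) * ((exp \<theta> * (lam * s)) ^ j / fact j)" for j
      using s lam0 by simp
  qed
  also have "exp (- (lam * s)) * exp (exp \<theta> * (lam * s)) = exp (lam * real k * (exp \<theta> - 1))"
    by (simp add: s_def exp_add[symmetric] algebra_simps)
  finally show ?thesis by (simp add: s_def)
qed

end


abbreviation PS :: "(real \<Rightarrow> real) measure" where
  "PS \<equiv> Pi\<^sub>M {0..} (\<lambda>_. borel)"

lemma PS_eval[measurable]: "0 \<le> r \<Longrightarrow> (\<lambda>f. f r) \<in> borel_measurable PS"
  by (rule measurable_component_singleton) simp

lemma Kp_PS[measurable]: "(\<lambda>f. Kp f t) \<in> measurable PS (count_space UNIV)"
  unfolding Kp_def by measurable

lemma Kp_restrict: "Kp (restrict f {0..}) t = Kp f t"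
  unfolding Kp_def by (simp add: add_nonneg_nonneg)

lemma (in prob_space) indep_var_nn:
  assumes "indep_var borel X borel Y" "\<And>\<omega>. 0 \<le> X \<omega>" "\<And>\<omega>. 0 \<le> Y \<omega>"
  shows "(\<integral>\<^sup>+\<omega>. ennreal (X \<omega> * Y \<omega>) \<partial>M) = (\<integral>\<^sup>+\<omega>. ennreal (X \<omega>) \<partial>M) * (\<integral>\<^sup>+\<omega>. ennreal (Y \<omega>) \<partial>M)"
proof -
  have "indep_var borel (ennreal \<circ> X) borel (ennreal \<circ> Y)"
    by (rule indep_var_compose[OF assms(1)]) auto
  moreover have cb: "case_bool (borel :: ennreal measure) borel = (\<lambda>_. borel)" by (rule ext) (simp split: bool.split)
  ultimately have iv: "indep_vars (\<lambda>_. borel) (case_bool (ennreal \<circ> X) (ennreal \<circ> Y)) UNIV"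
    unfolding indep_var_def by (simp only:)
  have "(\<integral>\<^sup>+\<omega>. (\<Prod>i\<in>UNIV. case_bool (ennreal \<circ> X) (ennreal \<circ> Y) i \<omega>) \<partial>M)
      = (\<Prod>i\<in>UNIV. \<integral>\<^sup>+\<omega>. case_bool (ennreal \<circ> X) (ennreal \<circ> Y) i \<omega> \<partial>M)"
    by (rule indep_vars_nn_integral) (use iv in auto)
  moreover have "(\<Prod>i\<in>UNIV. case_bool (ennreal \<circ> X) (ennreal \<circ> Y) i \<omega>) = ennreal (X \<omega> * Y \<omega>)" for \<omega>
    using assms(2,3) by (simp add: UNIV_bool ennreal_mult mult.commute)
  ultimately show ?thesis by (simp add: UNIV_bool mult.commute comp_def)
qed

lemma (in prob_space) pair_indep:
  assumes "indep_vars (\<lambda>_. M') X I" "i \<in> I" "j \<in> I" "i \<noteq> j"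
  shows "indep_var M' (X i) M' (X j)"
proof -
  have "indep_var (Pi\<^sub>M {i} (\<lambda>_. M')) (\<lambda>\<omega>. restrict (\<lambda>i. X i \<omega>) {i}) (Pi\<^sub>M {j} (\<lambda>_. M')) (\<lambda>\<omega>. restrict (\<lambda>i. X i \<omega>) {j})"
    by (rule indep_var_restrict[OF assms(1)]) (use assms in auto)
  then have "indep_var M' ((\<lambda>h. h i) \<circ> (\<lambda>\<omega>. restrict (\<lambda>i. X i \<omega>) {i})) M' ((\<lambda>h. h j) \<circ> (\<lambda>\<omega>. restrict (\<lambda>i. X i \<omega>) {j}))"
    by (rule indep_var_compose) (auto intro: measurable_component_singleton)
  moreover have "(\<lambda>h. h i) \<circ> (\<lambda>\<omega>. restrict (\<lambda>i. X i \<omega>) {i}) = X i" by auto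
  moreover have "(\<lambda>h. h j) \<circ> (\<lambda>\<omega>. restrict (\<lambda>i. X i \<omega>) {j}) = X j" by auto
  ultimately show ?thesis by simp
qed

lemma nn_if_const:
  assumes "{\<omega>\<in>space M. P \<omega>} \<in> sets M"
  shows "(\<integral>\<^sup>+\<omega>. (if P \<omega> then a else 0) \<partial>M) = a * emeasure M {\<omega>\<in>space M. P \<omega>}"
proof -
  have "(\<integral>\<^sup>+\<omega>. (if P \<omega> then a else 0) \<partial>M) = (\<integral>\<^sup>+\<omega>. a * indicator {\<omega>\<in>space M. P \<omega>} \<omega> \<partial>M)"
    by (intro nn_integral_cong) (auto simp: indicator_def)
  also have "\<dots> = a * emeasure M {\<omega>\<in>space M. P \<omega>}" using assms by (simp add: nn_integral_cmult_indicator)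
  finally show ?thesis .
qed

lemma side:
  assumes pois: "poisson_process M lam N"
    and ind: "prob_space.indep_var M PS (\<lambda>\<omega>. restrict (\<lambda>s. N s \<omega>) {0..}) PS (\<lambda>\<omega>. restrict (\<lambda>s. D s \<omega>) {0..})"
    and Dm: "\<And>s. D s \<in> borel_measurable M"
  shows "(\<integral>\<^sup>+\<omega>. ennreal (exp (\<theta> * N (real (g (Kp (\<lambda>s. D s \<omega>) t))) \<omega>)) \<partial>M)
       = (\<integral>\<^sup>+\<omega>. ennreal (exp (lam * (exp \<theta> - 1) * real (g (Kp (\<lambda>s. D s \<omega>) t)))) \<partial>M)"
proof -
  interpret pois M lam N by (rule pois.intro[OF pois])
  note [measurable] = Dm
  define K where "K \<omega> = g (Kp (\<lambda>s. D s \<omega>) t)" for \<omega>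
  have Km[measurable]: "K \<in> measurable M (count_space UNIV)" unfolding K_def Kp_def by measurable
  have single: "F (K \<omega>) = (\<Sum>k. if K \<omega> = k then F k else 0)" for F :: "nat \<Rightarrow> ennreal" and \<omega>
    using single_sum[of "K \<omega>" "\<lambda>k. if K \<omega> = k then F k else 0"] by auto
  have ind_k: "(\<integral>\<^sup>+\<omega>. (if K \<omega> = k then ennreal (exp (\<theta> * N (real k) \<omega>)) else 0) \<partial>M)
     = emeasure M {\<omega>\<in>space M. K \<omega> = k} * ennreal (exp (lam * real k * (exp \<theta> - 1)))" for k
  proof -
    define H where "H f = (if g (Kp f t) = k then 1 else (0::real))" for f :: "real \<Rightarrow> real"
    define G where "G f = exp (\<theta> * f (real k))" for f :: "real \<Rightarrow> real"
    have Hm: "H \<in> borel_measurable PS" unfolding H_def by measurable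
    have Gm: "G \<in> borel_measurable PS" unfolding G_def by measurable
    have "indep_var borel (G \<circ> (\<lambda>\<omega>. restrict (\<lambda>s. N s \<omega>) {0..})) borel (H \<circ> (\<lambda>\<omega>. restrict (\<lambda>s. D s \<omega>) {0..}))"
      by (rule indep_var_compose[OF ind Gm Hm])
    moreover have "(H \<circ> (\<lambda>\<omega>. restrict (\<lambda>s. D s \<omega>) {0..})) = (\<lambda>\<omega>. if K \<omega> = k then 1 else 0)"
      by (auto simp: H_def K_def Kp_restrict)
    moreover have "(G \<circ> (\<lambda>\<omega>. restrict (\<lambda>s. N s \<omega>) {0..})) = (\<lambda>\<omega>. exp (\<theta> * N (real k) \<omega>))"
      by (auto simp: G_def)
    ultimately have iv: "indep_var borel (\<lambda>\<omega>. exp (\<theta> * N (real k) \<omega>)) borel (\<lambda>\<omega>. if K \<omega> = k then 1 else (0::real))"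
      by simp
    have "(\<integral>\<^sup>+\<omega>. (if K \<omega> = k then ennreal (exp (\<theta> * N (real k) \<omega>)) else 0) \<partial>M)
        = (\<integral>\<^sup>+\<omega>. ennreal (exp (\<theta> * N (real k) \<omega>) * (if K \<omega> = k then 1 else 0)) \<partial>M)"
      by (intro nn_integral_cong) simp
    also have "\<dots> = (\<integral>\<^sup>+\<omega>. ennreal (exp (\<theta> * N (real k) \<omega>)) \<partial>M) * (\<integral>\<^sup>+\<omega>. ennreal (if K \<omega> = k then 1 else 0) \<partial>M)"
      by (rule indep_var_nn[OF iv]) auto
    also have "(\<integral>\<^sup>+\<omega>. ennreal (if K \<omega> = k then 1 else 0) \<partial>M) = (\<integral>\<^sup>+\<omega>. (if K \<omega> = k then 1 else 0) \<partial>M)"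
      by (intro nn_integral_cong) simp
    also have "\<dots> = 1 * emeasure M {\<omega>\<in>space M. K \<omega> = k}" by (rule nn_if_const) measurable
    finally show ?thesis by (simp add: pois_mgf mult.commute)
  qed
  have "(\<integral>\<^sup>+\<omega>. ennreal (exp (\<theta> * N (real (K \<omega>)) \<omega>)) \<partial>M)
      = (\<integral>\<^sup>+\<omega>. (\<Sum>k. if K \<omega> = k then ennreal (exp (\<theta> * N (real k) \<omega>)) else 0) \<partial>M)"
    using single[of "\<lambda>k. ennreal (exp (\<theta> * N (real k) _))"] by (intro nn_integral_cong) simp
  also have "\<dots> = (\<Sum>k. \<integral>\<^sup>+\<omega>. (if K \<omega> = k then ennreal (exp (\<theta> * N (real k) \<omega>)) else 0) \<partial>M)"
    by (rule nn_integral_suminf) measurable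
  also have "\<dots> = (\<Sum>k. emeasure M {\<omega>\<in>space M. K \<omega> = k} * ennreal (exp (lam * real k * (exp \<theta> - 1))))"
    by (simp add: ind_k)
  also have "\<dots> = (\<Sum>k. \<integral>\<^sup>+\<omega>. (if K \<omega> = k then ennreal (exp (lam * (exp \<theta> - 1) * real k)) else 0) \<partial>M)"
  proof (rule suminf_cong)
    fix k
    have "(\<integral>\<^sup>+\<omega>. (if K \<omega> = k then ennreal (exp (lam * (exp \<theta> - 1) * real k)) else 0) \<partial>M)
        = ennreal (exp (lam * (exp \<theta> - 1) * real k)) * emeasure M {\<omega>\<in>space M. K \<omega> = k}"
      by (rule nn_if_const) measurable
    then show "emeasure M {\<omega>\<in>space M. K \<omega> = k} * ennreal (exp (lam * real k * (exp \<theta> - 1)))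
        = (\<integral>\<^sup>+\<omega>. (if K \<omega> = k then ennreal (exp (lam * (exp \<theta> - 1) * real k)) else 0) \<partial>M)"
      by (simp add: mult.commute mult.left_commute)
  qed
  also have "\<dots> = (\<integral>\<^sup>+\<omega>. (\<Sum>k. if K \<omega> = k then ennreal (exp (lam * (exp \<theta> - 1) * real k)) else 0) \<partial>M)"
    by (rule nn_integral_suminf[symmetric]) measurable
  also have "\<dots> = (\<integral>\<^sup>+\<omega>. ennreal (exp (lam * (exp \<theta> - 1) * real (K \<omega>))) \<partial>M)"
    using single[of "\<lambda>k. ennreal (exp (lam * (exp \<theta> - 1) * real k))"] by (intro nn_integral_cong) simp
  finally show ?thesis by (simp add: K_def)
qed


lemma EXPR_squeeze:
  assumes A: "EXPR A \<rho>" and B: "EXPR B \<rho>" and le: "\<And>t. A t \<le> F t" "\<And>t. F t \<le> B t"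
  shows "EXPR F \<rho>"
proof (rule EXPR_I)
  fix \<epsilon> :: real assume e: "0 < \<epsilon>"
  show "\<forall>\<^sub>F t in at_top. ennreal (exp (t * (\<rho> - \<epsilon>))) \<le> F t"
    using EXPR_D[OF A e] by (rule eventually_mono) (use le in \<open>auto intro: order_trans\<close>)
  show "\<forall>\<^sub>F t in at_top. F t \<le> ennreal (exp (t * (\<rho> + \<epsilon>)))"
    using EXPR_D[OF B e] by (rule eventually_mono) (use le in \<open>auto intro: order_trans\<close>)
qed

lemma dyadic_tendsto:
  fixes s :: real
  shows "((\<lambda>n::nat. (real_of_int \<lfloor>2 ^ n * s\<rfloor> + 1) / 2 ^ n) \<longlongrightarrow> s) sequentially"
    and "\<And>n. s < (real_of_int \<lfloor>2 ^ n * s\<rfloor> + 1) / 2 ^ n"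
proof -
  have lo: "s < (real_of_int \<lfloor>2 ^ n * s\<rfloor> + 1) / 2 ^ n" for n :: nat
  proof -
    have "2 ^ n * s < real_of_int \<lfloor>2 ^ n * s\<rfloor> + 1" by linarith
    then show ?thesis by (simp add: field_simps)
  qed
  have hi: "(real_of_int \<lfloor>2 ^ n * s\<rfloor> + 1) / 2 ^ n \<le> s + (1/2) ^ n" for n :: nat
  proof -
    have "real_of_int \<lfloor>2 ^ n * s\<rfloor> + 1 \<le> 2 ^ n * s + 1" by linarith
    then show ?thesis by (simp add: field_simps power_divide)
  qed
  show "\<And>n. s < (real_of_int \<lfloor>2 ^ n * s\<rfloor> + 1) / 2 ^ n" by (rule lo)
  have "((\<lambda>n::nat. s + (1/2) ^ n) \<longlongrightarrow> s + 0) sequentially"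
    by (intro tendsto_add tendsto_const LIMSEQ_realpow_zero) auto
  note lim0 = this
  show "((\<lambda>n::nat. (real_of_int \<lfloor>2 ^ n * s\<rfloor> + 1) / 2 ^ n) \<longlongrightarrow> s) sequentially"
  proof (rule tendsto_sandwich[where f="\<lambda>n. s" and h="\<lambda>n. s + (1/2) ^ n"])
    show "\<forall>\<^sub>F n in sequentially. s \<le> (real_of_int \<lfloor>2 ^ n * s\<rfloor> + 1) / 2 ^ n"
      using lo by (intro always_eventually allI less_imp_le)
    show "\<forall>\<^sub>F n in sequentially. (real_of_int \<lfloor>2 ^ n * s\<rfloor> + 1) / 2 ^ n \<le> s + (1/2) ^ n"
      using hi by (intro always_eventually allI)
  qed (use lim0 in auto)
qed

lemma meas_comp:
  fixes N :: "real \<Rightarrow> 'a \<Rightarrow> real" and L :: "'a \<Rightarrow> real"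
  assumes Nm: "\<And>s. N s \<in> borel_measurable M"
    and rc: "\<And>\<omega> s. \<omega> \<in> space M \<Longrightarrow> 0 \<le> s \<Longrightarrow> continuous (at_right s) (\<lambda>r. N r \<omega>)"
    and Lm: "L \<in> borel_measurable M" and neg: "\<And>\<omega>. \<omega> \<in> space M \<Longrightarrow> L \<omega> < 0 \<Longrightarrow> L \<omega> = c0"
  shows "(\<lambda>\<omega>. N (L \<omega>) \<omega>) \<in> borel_measurable M"
proof -
  note [measurable] = Nm Lm
  define A where "A n \<omega> = N ((real_of_int \<lfloor>2 ^ n * max 0 (L \<omega>)\<rfloor> + 1) / 2 ^ n) \<omega>" for n :: nat and \<omega>
  have Am: "A n \<in> borel_measurable M" for n
  proof -
    have "(\<lambda>\<omega>. (\<lambda>j::int. N ((real_of_int j + 1) / 2 ^ n) \<omega>) (\<lfloor>2 ^ n * max 0 (L \<omega>)\<rfloor>)) \<in> borel_measurable M"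
      by (rule measurable_compose_countable[where f="\<lambda>j \<omega>. N ((real_of_int j + 1) / 2 ^ n) \<omega>"]) measurable
    then show ?thesis unfolding A_def by simp
  qed
  have Alim: "(\<lambda>n. A n \<omega>) \<longlonglongrightarrow> N (max 0 (L \<omega>)) \<omega>" if \<omega>: "\<omega> \<in> space M" for \<omega>
  proof -
    define s where "s = max 0 (L \<omega>)"
    have s0: "0 \<le> s" by (simp add: s_def)
    have "((\<lambda>r. N r \<omega>) \<longlongrightarrow> N s \<omega>) (at_right s)"
      using rc[OF \<omega> s0] by (simp add: continuous_within)
    moreover have "filterlim (\<lambda>n::nat. (real_of_int \<lfloor>2 ^ n * s\<rfloor> + 1) / 2 ^ n) (at_right s) sequentially"
      unfolding filterlim_at
    proof (intro conjI)
      show "\<forall>\<^sub>F n in sequentially. (real_of_int \<lfloor>2 ^ n * s\<rfloor> + 1) / 2 ^ n \<in> {s<..} \<and> (real_of_int \<lfloor>2 ^ n * s\<rfloor> + 1) / 2 ^ n \<noteq> s"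
      proof (intro always_eventually allI)
        fix n :: nat have "s < (real_of_int \<lfloor>2 ^ n * s\<rfloor> + 1) / 2 ^ n" by (rule dyadic_tendsto(2))
        then show "(real_of_int \<lfloor>2 ^ n * s\<rfloor> + 1) / 2 ^ n \<in> {s<..} \<and> (real_of_int \<lfloor>2 ^ n * s\<rfloor> + 1) / 2 ^ n \<noteq> s" by auto
      qed
    qed (rule dyadic_tendsto(1))
    ultimately have "((\<lambda>n. N ((real_of_int \<lfloor>2 ^ n * s\<rfloor> + 1) / 2 ^ n) \<omega>) \<longlongrightarrow> N s \<omega>) sequentially"
      by (rule filterlim_compose)
    then show ?thesis by (simp add: A_def s_def)
  qed
  have m1: "(\<lambda>\<omega>. N (max 0 (L \<omega>)) \<omega>) \<in> borel_measurable M"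
    by (rule borel_measurable_LIMSEQ_real[OF Alim Am])
  have "(\<lambda>\<omega>. if L \<omega> < 0 then N c0 \<omega> else N (max 0 (L \<omega>)) \<omega>) \<in> borel_measurable M"
    using m1 by measurable
  moreover have "\<And>\<omega>. \<omega> \<in> space M \<Longrightarrow> (if L \<omega> < 0 then N c0 \<omega> else N (max 0 (L \<omega>)) \<omega>) = N (L \<omega>) \<omega>"
    using neg by auto
  ultimately show ?thesis by (rule measurable_cong[THEN iffD1, rotated])
qed


definition gU :: "bool \<Rightarrow> nat \<Rightarrow> nat" where
  "gU b k = (if b then k else k - 1)"

locale setting =
  fixes M :: "'a measure" and N1 N2 D1 D2 :: "real \<Rightarrow> 'a \<Rightarrow> real" and lam1 lam2 nu1 nu2 :: real
  assumes nu: "0 < nu1" "nu1 < 1" "0 < nu2" "nu2 < 1"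
    and P1: "poisson_process M lam1 N1" and P2: "poisson_process M lam2 N2"
    and S1: "stable_subordinator M nu1 D1" and S2: "stable_subordinator M nu2 D2"
    and IND: "prob_space.indep_vars M (\<lambda>_. PS) (\<lambda>i \<omega>. restrict (\<lambda>t. ([N1, N2, D1, D2] ! i) t \<omega>) {0..}) {0..<4}"
begin

sublocale s1: stsub M nu1 D1 by (rule stsub.intro[OF S1])
sublocale s2: stsub M nu2 D2 by (rule stsub.intro[OF S2])
sublocale p1: pois M lam1 N1 by (rule pois.intro[OF P1])
sublocale p2: pois M lam2 N2 by (rule pois.intro[OF P2])

abbreviation X :: "nat \<Rightarrow> 'a \<Rightarrow> real \<Rightarrow> real" where
  "X \<equiv> (\<lambda>i \<omega>. restrict (\<lambda>t. ([N1, N2, D1, D2] ! i) t \<omega>) {0..})"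

lemma ind02: "prob_space.indep_var M PS (\<lambda>\<omega>. restrict (\<lambda>s. N1 s \<omega>) {0..}) PS (\<lambda>\<omega>. restrict (\<lambda>s. D1 s \<omega>) {0..})"
  using s1.pair_indep[OF IND, of 0 2] by simp

lemma ind13: "prob_space.indep_var M PS (\<lambda>\<omega>. restrict (\<lambda>s. N2 s \<omega>) {0..}) PS (\<lambda>\<omega>. restrict (\<lambda>s. D2 s \<omega>) {0..})"
  using s1.pair_indep[OF IND, of 1 3] by simp

lemma indpairs: "prob_space.indep_var M (Pi\<^sub>M {0::nat,2} (\<lambda>_. PS)) (\<lambda>\<omega>. restrict (\<lambda>i. X i \<omega>) {0,2})
    (Pi\<^sub>M {1::nat,3} (\<lambda>_. PS)) (\<lambda>\<omega>. restrict (\<lambda>i. X i \<omega>) {1,3})"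
  by (rule s1.indep_var_restrict[OF IND]) auto

lemma main_prod:
  "(\<integral>\<^sup>+\<omega>. ennreal (exp (\<theta> * N1 (real (g1 (Kp (\<lambda>s. D1 s \<omega>) t))) \<omega> - \<theta> * N2 (real (g2 (Kp (\<lambda>s. D2 s \<omega>) t))) \<omega>)) \<partial>M)
   = (\<integral>\<^sup>+\<omega>. ennreal (exp (lam1 * (exp \<theta> - 1) * real (g1 (Kp (\<lambda>s. D1 s \<omega>) t)))) \<partial>M)
   * (\<integral>\<^sup>+\<omega>. ennreal (exp (lam2 * (exp (- \<theta>) - 1) * real (g2 (Kp (\<lambda>s. D2 s \<omega>) t)))) \<partial>M)"
proof -
  define F1 where "F1 = (\<lambda>h :: nat \<Rightarrow> real \<Rightarrow> real. exp (\<theta> * (h (0::nat)) (real (g1 (Kp (h 2) t)))))"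
  define F2 where "F2 = (\<lambda>h :: nat \<Rightarrow> real \<Rightarrow> real. exp ((- \<theta>) * (h (1::nat)) (real (g2 (Kp (h 3) t)))))"
  have F1m: "F1 \<in> borel_measurable (Pi\<^sub>M {0,2} (\<lambda>_. PS))"
  proof -
    have "(\<lambda>h. (\<lambda>k h. exp (\<theta> * (h (0::nat)) (real k))) (g1 (Kp (h 2) t)) h) \<in> borel_measurable (Pi\<^sub>M {0,2} (\<lambda>_. PS))"
    proof (rule measurable_compose_countable)
      fix k :: nat
      have "(\<lambda>h::nat \<Rightarrow> real \<Rightarrow> real. h 0) \<in> measurable (Pi\<^sub>M {0,2} (\<lambda>_. PS)) PS"
        by (rule measurable_component_singleton) simp
      then show "(\<lambda>h. exp (\<theta> * (h (0::nat)) (real k))) \<in> borel_measurable (Pi\<^sub>M {0,2} (\<lambda>_. PS))"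
        by measurable
    next
      have "(\<lambda>h::nat \<Rightarrow> real \<Rightarrow> real. h 2) \<in> measurable (Pi\<^sub>M {0,2} (\<lambda>_. PS)) PS"
        by (rule measurable_component_singleton) simp
      then show "(\<lambda>h. g1 (Kp (h 2) t)) \<in> measurable (Pi\<^sub>M {0,2} (\<lambda>_. PS)) (count_space UNIV)"
        by measurable
    qed
    then show ?thesis by (simp add: F1_def)
  qed
  have F2m: "F2 \<in> borel_measurable (Pi\<^sub>M {1,3} (\<lambda>_. PS))"
  proof -
    have "(\<lambda>h. (\<lambda>k h. exp ((- \<theta>) * (h (1::nat)) (real k))) (g2 (Kp (h 3) t)) h) \<in> borel_measurable (Pi\<^sub>M {1,3} (\<lambda>_. PS))"
    proof (rule measurable_compose_countable)
      fix k :: nat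
      have "(\<lambda>h::nat \<Rightarrow> real \<Rightarrow> real. h 1) \<in> measurable (Pi\<^sub>M {1,3} (\<lambda>_. PS)) PS"
        by (rule measurable_component_singleton) simp
      then show "(\<lambda>h. exp ((- \<theta>) * (h (1::nat)) (real k))) \<in> borel_measurable (Pi\<^sub>M {1,3} (\<lambda>_. PS))"
        by measurable
    next
      have "(\<lambda>h::nat \<Rightarrow> real \<Rightarrow> real. h 3) \<in> measurable (Pi\<^sub>M {1,3} (\<lambda>_. PS)) PS"
        by (rule measurable_component_singleton) simp
      then show "(\<lambda>h. g2 (Kp (h 3) t)) \<in> measurable (Pi\<^sub>M {1,3} (\<lambda>_. PS)) (count_space UNIV)"
        by measurable
    qed
    then show ?thesis by (simp add: F2_def)
  qed
  have iv: "prob_space.indep_var M borel (F1 \<circ> (\<lambda>\<omega>. restrict (\<lambda>i. X i \<omega>) {0,2})) borel (F2 \<circ> (\<lambda>\<omega>. restrict (\<lambda>i. X i \<omega>) {1,3}))"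
    by (rule s1.indep_var_compose[OF indpairs F1m F2m])
  have e1: "F1 \<circ> (\<lambda>\<omega>. restrict (\<lambda>i. X i \<omega>) {0,2}) = (\<lambda>\<omega>. exp (\<theta> * N1 (real (g1 (Kp (\<lambda>s. D1 s \<omega>) t))) \<omega>))"
    by (rule ext) (simp add: F1_def Kp_restrict)
  have e2: "F2 \<circ> (\<lambda>\<omega>. restrict (\<lambda>i. X i \<omega>) {1,3}) = (\<lambda>\<omega>. exp ((- \<theta>) * N2 (real (g2 (Kp (\<lambda>s. D2 s \<omega>) t))) \<omega>))"
    by (rule ext) (simp add: F2_def Kp_restrict)
  have "(\<integral>\<^sup>+\<omega>. ennreal (exp (\<theta> * N1 (real (g1 (Kp (\<lambda>s. D1 s \<omega>) t))) \<omega> - \<theta> * N2 (real (g2 (Kp (\<lambda>s. D2 s \<omega>) t))) \<omega>)) \<partial>M)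
    = (\<integral>\<^sup>+\<omega>. ennreal (exp (\<theta> * N1 (real (g1 (Kp (\<lambda>s. D1 s \<omega>) t))) \<omega>) * exp ((- \<theta>) * N2 (real (g2 (Kp (\<lambda>s. D2 s \<omega>) t))) \<omega>)) \<partial>M)"
    by (intro nn_integral_cong) (simp add: exp_diff exp_minus divide_inverse)
  also have "\<dots> = (\<integral>\<^sup>+\<omega>. ennreal (exp (\<theta> * N1 (real (g1 (Kp (\<lambda>s. D1 s \<omega>) t))) \<omega>)) \<partial>M)
      * (\<integral>\<^sup>+\<omega>. ennreal (exp ((- \<theta>) * N2 (real (g2 (Kp (\<lambda>s. D2 s \<omega>) t))) \<omega>)) \<partial>M)"
    by (rule s1.indep_var_nn) (use iv e1 e2 in auto)
  also have "(\<integral>\<^sup>+\<omega>. ennreal (exp (\<theta> * N1 (real (g1 (Kp (\<lambda>s. D1 s \<omega>) t))) \<omega>)) \<partial>M)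
      = (\<integral>\<^sup>+\<omega>. ennreal (exp (lam1 * (exp \<theta> - 1) * real (g1 (Kp (\<lambda>s. D1 s \<omega>) t)))) \<partial>M)"
    by (rule side[OF P1 ind02 s1.meas])
  also have "(\<integral>\<^sup>+\<omega>. ennreal (exp ((- \<theta>) * N2 (real (g2 (Kp (\<lambda>s. D2 s \<omega>) t))) \<omega>)) \<partial>M)
      = (\<integral>\<^sup>+\<omega>. ennreal (exp (lam2 * (exp (- \<theta>) - 1) * real (g2 (Kp (\<lambda>s. D2 s \<omega>) t)))) \<partial>M)"
    by (rule side[OF P2 ind13 s2.meas])
  finally show ?thesis .
qed

definition Yt :: "real \<Rightarrow> 'a \<Rightarrow> real" where
  "Yt t \<omega> = N1 (inverse_subordinator D1 t \<omega>) \<omega> - N2 (inverse_subordinator D2 t \<omega>) \<omega>"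

lemma Y_meas[measurable]: "Yt t \<in> borel_measurable M"
proof -
  have a: "(\<lambda>\<omega>. N1 (s1.L t \<omega>) \<omega>) \<in> borel_measurable M"
  proof -
    have neg: "\<And>\<omega>. \<omega> \<in> space M \<Longrightarrow> s1.L t \<omega> < 0 \<Longrightarrow> s1.L t \<omega> = Inf {}"
      using s1.L_bad s1.L_nonneg by force
    show ?thesis by (rule meas_comp[OF _ _ _ neg]) (auto intro: p1.Nrc)
  qed
  have b: "(\<lambda>\<omega>. N2 (s2.L t \<omega>) \<omega>) \<in> borel_measurable M"
  proof -
    have neg: "\<And>\<omega>. \<omega> \<in> space M \<Longrightarrow> s2.L t \<omega> < 0 \<Longrightarrow> s2.L t \<omega> = Inf {}"
      using s2.L_bad s2.L_nonneg by force
    show ?thesis by (rule meas_comp[OF _ _ _ neg]) (auto intro: p2.Nrc)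
  qed
  show ?thesis unfolding Yt_def using a b by measurable
qed

lemma Nbr1:
  assumes "\<omega> \<in> space M" "\<omega> \<notin> s1.bad t"
  shows "N1 (real (s1.KD t \<omega> - 1)) \<omega> \<le> N1 (s1.L t \<omega>) \<omega>" "N1 (s1.L t \<omega>) \<omega> \<le> N1 (real (s1.KD t \<omega>)) \<omega>"
proof -
  have L0: "0 \<le> s1.L t \<omega>" by (rule s1.L_nonneg[OF assms])
  note kb = s1.KD_bounds[OF assms]
  show "N1 (real (s1.KD t \<omega> - 1)) \<omega> \<le> N1 (s1.L t \<omega>) \<omega>"
    by (rule mono_onD[OF p1.Nmono[OF assms(1)]]) (use kb L0 in auto)
  show "N1 (s1.L t \<omega>) \<omega> \<le> N1 (real (s1.KD t \<omega>)) \<omega>"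
    by (rule mono_onD[OF p1.Nmono[OF assms(1)]]) (use kb L0 in auto)
qed

lemma Nbr2:
  assumes "\<omega> \<in> space M" "\<omega> \<notin> s2.bad t"
  shows "N2 (real (s2.KD t \<omega> - 1)) \<omega> \<le> N2 (s2.L t \<omega>) \<omega>" "N2 (s2.L t \<omega>) \<omega> \<le> N2 (real (s2.KD t \<omega>)) \<omega>"
proof -
  have L0: "0 \<le> s2.L t \<omega>" by (rule s2.L_nonneg[OF assms])
  note kb = s2.KD_bounds[OF assms]
  show "N2 (real (s2.KD t \<omega> - 1)) \<omega> \<le> N2 (s2.L t \<omega>) \<omega>"
    by (rule mono_onD[OF p2.Nmono[OF assms(1)]]) (use kb L0 in auto)
  show "N2 (s2.L t \<omega>) \<omega> \<le> N2 (real (s2.KD t \<omega>)) \<omega>"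
    by (rule mono_onD[OF p2.Nmono[OF assms(1)]]) (use kb L0 in auto)
qed

lemma bracket:
  assumes "\<omega> \<in> space M" "\<omega> \<notin> s1.bad t" "\<omega> \<notin> s2.bad t"
  shows "\<theta> * Yt t \<omega> \<le> \<theta> * N1 (real (gU (0 \<le> \<theta>) (s1.KD t \<omega>))) \<omega> - \<theta> * N2 (real (gU (\<not> 0 \<le> \<theta>) (s2.KD t \<omega>))) \<omega>"
    and "\<theta> * N1 (real (gU (\<not> 0 \<le> \<theta>) (s1.KD t \<omega>))) \<omega> - \<theta> * N2 (real (gU (0 \<le> \<theta>) (s2.KD t \<omega>))) \<omega> \<le> \<theta> * Yt t \<omega>"
proof -
  note a = Nbr1[OF assms(1,2)] and b = Nbr2[OF assms(1,3)]
  have Y: "\<theta> * Yt t \<omega> = \<theta> * N1 (s1.L t \<omega>) \<omega> - \<theta> * N2 (s2.L t \<omega>) \<omega>"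
    by (simp add: Yt_def algebra_simps)
  show "\<theta> * Yt t \<omega> \<le> \<theta> * N1 (real (gU (0 \<le> \<theta>) (s1.KD t \<omega>))) \<omega> - \<theta> * N2 (real (gU (\<not> 0 \<le> \<theta>) (s2.KD t \<omega>))) \<omega>"
  proof (cases "0 \<le> \<theta>")
    case True
    have "\<theta> * N1 (s1.L t \<omega>) \<omega> \<le> \<theta> * N1 (real (s1.KD t \<omega>)) \<omega>" using a True by (intro mult_left_mono) auto
    moreover have "\<theta> * N2 (real (s2.KD t \<omega> - 1)) \<omega> \<le> \<theta> * N2 (s2.L t \<omega>) \<omega>" using b True by (intro mult_left_mono) auto
    moreover have "gU True (s1.KD t \<omega>) = s1.KD t \<omega>" "gU False (s2.KD t \<omega>) = s2.KD t \<omega> - 1"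
      "gU False (s1.KD t \<omega>) = s1.KD t \<omega> - 1" "gU True (s2.KD t \<omega>) = s2.KD t \<omega>" by (simp_all add: gU_def)
    ultimately show ?thesis using True Y by (simp only: simp_thms; linarith)
  next
    case False
    have "\<theta> * N1 (s1.L t \<omega>) \<omega> \<le> \<theta> * N1 (real (s1.KD t \<omega> - 1)) \<omega>" using a False by (intro mult_left_mono_neg) auto
    moreover have "\<theta> * N2 (real (s2.KD t \<omega>)) \<omega> \<le> \<theta> * N2 (s2.L t \<omega>) \<omega>" using b False by (intro mult_left_mono_neg) auto
    moreover have "gU True (s1.KD t \<omega>) = s1.KD t \<omega>" "gU False (s2.KD t \<omega>) = s2.KD t \<omega> - 1"
      "gU False (s1.KD t \<omega>) = s1.KD t \<omega> - 1" "gU True (s2.KD t \<omega>) = s2.KD t \<omega>" by (simp_all add: gU_def)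
    ultimately show ?thesis using False Y by (simp only: simp_thms; linarith)
  qed
  show "\<theta> * N1 (real (gU (\<not> 0 \<le> \<theta>) (s1.KD t \<omega>))) \<omega> - \<theta> * N2 (real (gU (0 \<le> \<theta>) (s2.KD t \<omega>))) \<omega> \<le> \<theta> * Yt t \<omega>"
  proof (cases "0 \<le> \<theta>")
    case True
    have "\<theta> * N1 (real (s1.KD t \<omega> - 1)) \<omega> \<le> \<theta> * N1 (s1.L t \<omega>) \<omega>" using a True by (intro mult_left_mono) auto
    moreover have "\<theta> * N2 (s2.L t \<omega>) \<omega> \<le> \<theta> * N2 (real (s2.KD t \<omega>)) \<omega>" using b True by (intro mult_left_mono) auto
    moreover have "gU True (s1.KD t \<omega>) = s1.KD t \<omega>" "gU False (s2.KD t \<omega>) = s2.KD t \<omega> - 1"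
      "gU False (s1.KD t \<omega>) = s1.KD t \<omega> - 1" "gU True (s2.KD t \<omega>) = s2.KD t \<omega>" by (simp_all add: gU_def)
    ultimately show ?thesis using True Y by (simp only: simp_thms; linarith)
  next
    case False
    have "\<theta> * N1 (real (s1.KD t \<omega>)) \<omega> \<le> \<theta> * N1 (s1.L t \<omega>) \<omega>" using a False by (intro mult_left_mono_neg) auto
    moreover have "\<theta> * N2 (s2.L t \<omega>) \<omega> \<le> \<theta> * N2 (real (s2.KD t \<omega> - 1)) \<omega>" using b False by (intro mult_left_mono_neg) auto
    moreover have "gU True (s1.KD t \<omega>) = s1.KD t \<omega>" "gU False (s2.KD t \<omega>) = s2.KD t \<omega> - 1"
      "gU False (s1.KD t \<omega>) = s1.KD t \<omega> - 1" "gU True (s2.KD t \<omega>) = s2.KD t \<omega>" by (simp_all add: gU_def)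
    ultimately show ?thesis using False Y by (simp only: simp_thms; linarith)
  qed
qed

lemma prod_MGK:
  "(\<integral>\<^sup>+\<omega>. ennreal (exp (\<theta> * N1 (real (gU b1 (s1.KD t \<omega>))) \<omega> - \<theta> * N2 (real (gU b2 (s2.KD t \<omega>))) \<omega>)) \<partial>M)
   = s1.MGK b1 t (lam1 * (exp \<theta> - 1)) * s2.MGK b2 t (lam2 * (exp (- \<theta>) - 1))"
  unfolding main_prod s1.MGK_def s2.MGK_def by (simp add: gU_def if_distrib)

lemma EXPR_E:
  "EXPR (\<lambda>t. \<integral>\<^sup>+\<omega>. ennreal (exp (\<theta> * Yt t \<omega>)) \<partial>M) (Psi1 nu1 nu2 lam1 lam2 \<theta>)"
proof -
  define c1 where "c1 = lam1 * (exp \<theta> - 1)"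
  define c2 where "c2 = lam2 * (exp (- \<theta>) - 1)"
  have rho: "max 0 c1 powr (1/nu1) + max 0 c2 powr (1/nu2) = Psi1 nu1 nu2 lam1 lam2 \<theta>"
  proof (cases "0 \<le> \<theta>")
    case True
    have "0 \<le> c1" using True p1.lam0 by (simp add: c1_def)
    moreover have "c2 \<le> 0" using True p2.lam0 by (simp add: c2_def mult_nonneg_nonpos)
    ultimately show ?thesis using True by (simp add: Psi1_def c1_def max_def)
  next
    case False
    have "c1 \<le> 0" using False p1.lam0 by (simp add: c1_def mult_nonneg_nonpos)
    moreover have "0 \<le> c2" using False p2.lam0 by (simp add: c2_def)
    ultimately show ?thesis using False by (simp add: Psi1_def c2_def max_def)
  qed
  have lo: "s1.MGK (\<not> 0 \<le> \<theta>) t c1 * s2.MGK (0 \<le> \<theta>) t c2 \<le> (\<integral>\<^sup>+\<omega>. ennreal (exp (\<theta> * Yt t \<omega>)) \<partial>M)" for t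
  proof -
    have "s1.MGK (\<not> 0 \<le> \<theta>) t c1 * s2.MGK (0 \<le> \<theta>) t c2
      = (\<integral>\<^sup>+\<omega>. ennreal (exp (\<theta> * N1 (real (gU (\<not> 0 \<le> \<theta>) (s1.KD t \<omega>))) \<omega> - \<theta> * N2 (real (gU (0 \<le> \<theta>) (s2.KD t \<omega>))) \<omega>)) \<partial>M)"
      unfolding prod_MGK c1_def c2_def ..
    also have "\<dots> \<le> (\<integral>\<^sup>+\<omega>. ennreal (exp (\<theta> * Yt t \<omega>)) \<partial>M)"
    proof (rule nn_integral_mono_AE)
      show "AE \<omega> in M. ennreal (exp (\<theta> * N1 (real (gU (\<not> 0 \<le> \<theta>) (s1.KD t \<omega>))) \<omega> - \<theta> * N2 (real (gU (0 \<le> \<theta>) (s2.KD t \<omega>))) \<omega>))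
          \<le> ennreal (exp (\<theta> * Yt t \<omega>))"
        using s1.bad_AE[of t] s2.bad_AE[of t]
        by (rule AE_mp[OF AE_conjI, OF _ _ AE_I2]) (auto intro!: ennreal_leI dest: bracket(2))
    qed
    finally show ?thesis .
  qed
  have up: "(\<integral>\<^sup>+\<omega>. ennreal (exp (\<theta> * Yt t \<omega>)) \<partial>M) \<le> s1.MGK (0 \<le> \<theta>) t c1 * s2.MGK (\<not> 0 \<le> \<theta>) t c2" for t
  proof -
    have "(\<integral>\<^sup>+\<omega>. ennreal (exp (\<theta> * Yt t \<omega>)) \<partial>M)
       \<le> (\<integral>\<^sup>+\<omega>. ennreal (exp (\<theta> * N1 (real (gU (0 \<le> \<theta>) (s1.KD t \<omega>))) \<omega> - \<theta> * N2 (real (gU (\<not> 0 \<le> \<theta>) (s2.KD t \<omega>))) \<omega>)) \<partial>M)"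
    proof (rule nn_integral_mono_AE)
      show "AE \<omega> in M. ennreal (exp (\<theta> * Yt t \<omega>)) \<le> ennreal (exp (\<theta> * N1 (real (gU (0 \<le> \<theta>) (s1.KD t \<omega>))) \<omega> - \<theta> * N2 (real (gU (\<not> 0 \<le> \<theta>) (s2.KD t \<omega>))) \<omega>))"
        using s1.bad_AE[of t] s2.bad_AE[of t]
        by (rule AE_mp[OF AE_conjI, OF _ _ AE_I2]) (auto intro!: ennreal_leI dest: bracket(1))
    qed
    also have "\<dots> = s1.MGK (0 \<le> \<theta>) t c1 * s2.MGK (\<not> 0 \<le> \<theta>) t c2"
      unfolding prod_MGK c1_def c2_def ..
    finally show ?thesis .
  qed
  have "EXPR (\<lambda>t. \<integral>\<^sup>+\<omega>. ennreal (exp (\<theta> * Yt t \<omega>)) \<partial>M) (max 0 c1 powr (1/nu1) + max 0 c2 powr (1/nu2))"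
    by (rule EXPR_squeeze[OF EXPR_mult[OF s1.EXPR_MGK s2.EXPR_MGK] EXPR_mult[OF s1.EXPR_MGK s2.EXPR_MGK] lo up])
       (use nu in auto)
  then show ?thesis unfolding rho .
qed

lemma mgf_lim:
  shows "\<forall>\<^sub>F t in at_top. integrable M (\<lambda>\<omega>. exp (\<theta> * Yt t \<omega>))"
    and "((\<lambda>t. ln (\<integral>\<omega>. exp (\<theta> * Yt t \<omega>) \<partial>M) / t) \<longlongrightarrow> Psi1 nu1 nu2 lam1 lam2 \<theta>) at_top"
proof -
  note E = EXPR_E[of \<theta>]
  have int: "integrable M (\<lambda>\<omega>. exp (\<theta> * Yt t \<omega>))"
    if "(\<integral>\<^sup>+\<omega>. ennreal (exp (\<theta> * Yt t \<omega>)) \<partial>M) < \<top>" for t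
    by (rule integrableI_bounded) (use that in auto)
  show "\<forall>\<^sub>F t in at_top. integrable M (\<lambda>\<omega>. exp (\<theta> * Yt t \<omega>))"
    using EXPR_lim(2)[OF E] by (rule eventually_mono) (rule int)
  have eq: "\<forall>\<^sub>F t in at_top. ln (enn2real (\<integral>\<^sup>+\<omega>. ennreal (exp (\<theta> * Yt t \<omega>)) \<partial>M)) / t
      = ln (\<integral>\<omega>. exp (\<theta> * Yt t \<omega>) \<partial>M) / t"
    using EXPR_lim(2)[OF E]
  proof (rule eventually_mono)
    fix t assume "(\<integral>\<^sup>+\<omega>. ennreal (exp (\<theta> * Yt t \<omega>)) \<partial>M) < \<top>"
    then have "integrable M (\<lambda>\<omega>. exp (\<theta> * Yt t \<omega>))" by (rule int)
    then show "ln (enn2real (\<integral>\<^sup>+\<omega>. ennreal (exp (\<theta> * Yt t \<omega>)) \<partial>M)) / t = ln (\<integral>\<omega>. exp (\<theta> * Yt t \<omega>) \<partial>M) / t"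
      by (simp add: integral_eq_nn_integral)
  qed
  show "((\<lambda>t. ln (\<integral>\<omega>. exp (\<theta> * Yt t \<omega>) \<partial>M) / t) \<longlongrightarrow> Psi1 nu1 nu2 lam1 lam2 \<theta>) at_top"
    by (rule Lim_transform_eventually[OF EXPR_lim(1)[OF E] eq])
qed

end


theorem proposition3p1:
  fixes M :: "'a measure"
    and N1 N2 D1 D2 :: "real \<Rightarrow> 'a \<Rightarrow> real"
    and lam1 lam2 nu1 nu2 :: real
  assumes "prob_space M"
    and "0 < lam1" "0 < lam2"
    and "0 < nu1" "nu1 < 1" "0 < nu2" "nu2 < 1"
    and "poisson_process M lam1 N1" "poisson_process M lam2 N2"
    and "stable_subordinator M nu1 D1" "stable_subordinator M nu2 D2"
    and "prob_space.indep_vars M (\<lambda>_. Pi\<^sub>M {0..} (\<lambda>_. borel))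
           (\<lambda>i \<omega>. restrict (\<lambda>t. ([N1, N2, D1, D2] ! i) t \<omega>) {0..}) {0..<4}"
  shows "LDP M (\<lambda>t \<omega>. (N1 (inverse_subordinator D1 t \<omega>) \<omega>
                        - N2 (inverse_subordinator D2 t \<omega>) \<omega>) / t)
             (\<lambda>t. t) (I_LD1 nu1 nu2 lam1 lam2)
       \<and> good_rate_function (I_LD1 nu1 nu2 lam1 lam2)"
proof -
  interpret S: setting M N1 N2 D1 D2 lam1 lam2 nu1 nu2
    by (rule setting.intro) (use assms in auto)
  have "LDP M (\<lambda>t \<omega>. S.Yt t \<omega> / t) (\<lambda>t. t) (Irate (Psi1 nu1 nu2 lam1 lam2))"
  proof (rule GE_LDP[OF assms(1)])
    show "\<And>t. S.Yt t \<in> borel_measurable M" by (rule S.Y_meas)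
    show "\<And>\<theta>. \<forall>\<^sub>F t in at_top. integrable M (\<lambda>\<omega>. exp (\<theta> * S.Yt t \<omega>))" by (rule S.mgf_lim(1))
    show "\<And>\<theta>. ((\<lambda>t. ln (\<integral>\<omega>. exp (\<theta> * S.Yt t \<omega>) \<partial>M) / t) \<longlongrightarrow> Psi1 nu1 nu2 lam1 lam2 \<theta>) at_top"
      by (rule S.mgf_lim(2))
    show "\<And>\<theta>. 0 \<le> Psi1 nu1 nu2 lam1 lam2 \<theta>" by (rule Psi1_nonneg)
    show "Psi1 nu1 nu2 lam1 lam2 0 = 0" by (rule Psi1_0)
    show "\<And>x. \<exists>\<theta>. LOK (Psi1 nu1 nu2 lam1 lam2) x \<theta>" by (rule Psi1_LOK) (use assms in auto)
  qed
  then show ?thesis unfolding S.Yt_def I_LD1_Irate using Irate_good by simp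
qed


end
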